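(* Let $d,m\in\mathbb{N}$, let $\mathcal{X}\subseteq\mathbb{R}^d$ be a bounded domain, $\mathcal{Y}=\{-1,1\}$, $\mathcal{Z}=\mathcal{X}\times\mathcal{Y}$, and let $\rho$ be a probability distribution on $\mathcal{Z}$. Let ${\bf z}=\{z_i=(x_i,y_i): i=1,\dots,m\}$ be drawn i.i.d. from $\rho$. Fix $r>0$, $\lambda>0$ and a matrix norm $\|\cdot\|$ on $d\times d$ matrices. For symmetric $A\in\mathbb{S}^{d\times d}$ let $K_A(x,x')=x^TAx'$ and $$\mathcal{E}_{\bf z}(A)=\frac1m\sum_{i=1}^m\Big(1-\frac{1}{mr}\sum_{j=1}^m y_iy_jK_A(x_i,x_j)\Big)_+,$$ and let $A_{\bf z}\in\arg\min_{A\in\mathbb{S}^{d\times d}}\big[\mathcal{E}_{\bf z}(A)+\lambda\|A\|\big]$. Let $$f_{\bf z}\in\arg\min\Big\{\frac1m\sum_{i=1}^m(1-y_if(x_i))_+ : f=\sum_{j=1}^m\alpha_jK_{A_{\bf z}}(x_j,\cdot),\ \alpha_j\in\mathbb{R},\ \sum_{j=1}^m|\alpha_j|\le 1/r\Big\},$$ and for a function $f:\mathcal{X}\to\mathbb{R}$ let $\mathscr{E}(f)=\int_{\mathcal{Z}}(1-yf(x))_+\,d\rho(x,y)$. Then for any $0<\delta<1$, with probability at least $1-\delta$ over ${\bf z}$, $$\mathscr{E}(f_{\bf z})\le \mathcal{E}_{\bf z}(A_{\bf z})+\frac{4\mathcal{R}_m}{\lambda r}+\frac{2X_*}{\lambda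 r}\sqrt{\frac{2\log(1/\delta)}{m}},$$ where $X_*=\sup_{x,x'\in\mathcal{X}}\|x'x^T\|_*$ and $\mathcal{R}_m=\mathbb{E}_{{\bf z},\sigma}\Big[\sup_{\tilde x\in\mathcal{X}}\Big\|\frac1m\sum_{i=1}^m\sigma_iy_ix_i\tilde x^T\Big\|_*\Big]$.
   Context: $(t)_+=\max(t,0)$. The dual norm is $\|B\|_*=\sup_{\|A\|\le1}\mathrm{trace}(B^TA)$. In $\mathcal{R}_m$, $\sigma_1,\dots,\sigma_m$ are i.i.d. Rademacher variables ($P(\sigma_i=\pm1)=1/2$) independent of ${\bf z}$, and the expectation is over both ${\bf z}$ and $\sigma$. $\mathbb{S}^{d\times d}$ denotes the symmetric $d\times d$ real matrices. *)

theory Defs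
  imports "HOL-Analysis.Analysis" "HOL-Probability.Probability"
begin

definition pos_part :: "real \<Rightarrow> real" where
  "pos_part t = max t 0"

definition is_matrix_norm :: "(real^'d^'d \<Rightarrow> real) \<Rightarrow> bool" where
  "is_matrix_norm N \<longleftrightarrow>
     (\<forall>A. 0 \<le> N A) \<and> (\<forall>A. N A = 0 \<longleftrightarrow> A = 0) \<and>
     (\<forall>c A. N (c *\<^sub>R A) = \<bar>c\<bar> * N A) \<and>
     (\<forall>A B. N (A + B) \<le> N A + N B)"

definition dual_norm :: "(real^'d^'d \<Rightarrow> real) \<Rightarrow> real^'d^'d \<Rightarrow> real" where
  "dual_norm N B = Sup {trace (transpose B ** A) | A. N A \<le> 1}"

definition outer :: "real^'d \<Rightarrow> real^'d \<Rightarrow> real^'d^'d" where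
  "outer u v = (\<chi> i j. u $ i * v $ j)"

definition KA :: "real^'d^'d \<Rightarrow> real^'d \<Rightarrow> real^'d \<Rightarrow> real" where
  "KA A x x' = x \<bullet> (A *v x')"

definition emp_err_A :: "nat \<Rightarrow> real \<Rightarrow> (nat \<Rightarrow> (real^'d) \<times> real) \<Rightarrow> real^'d^'d \<Rightarrow> real" where
  "emp_err_A m r z A = (1 / real m) * (\<Sum>i<m. pos_part (1 - (1 / (real m * r)) *
      (\<Sum>j<m. snd (z i) * snd (z j) * KA A (fst (z i)) (fst (z j)))))"

definition emp_hinge :: "nat \<Rightarrow> (nat \<Rightarrow> (real^'d) \<times> real) \<Rightarrow> (real^'d \<Rightarrow> real) \<Rightarrow> real" where
  "emp_hinge m z f = (1 / real m) * (\<Sum>i<m. pos_part (1 - snd (z i) * f (fst (z i))))"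

definition hyp_space :: "nat \<Rightarrow> real \<Rightarrow> (nat \<Rightarrow> (real^'d) \<times> real) \<Rightarrow> real^'d^'d \<Rightarrow> (real^'d \<Rightarrow> real) set" where
  "hyp_space m r z A = {f. \<exists>\<alpha>::nat \<Rightarrow> real. (\<Sum>j<m. \<bar>\<alpha> j\<bar>) \<le> 1 / r \<and>
       f = (\<lambda>x. \<Sum>j<m. \<alpha> j * KA A (fst (z j)) x)}"

definition gen_err :: "((real^'d) \<times> real) measure \<Rightarrow> (real^'d \<Rightarrow> real) \<Rightarrow> real" where
  "gen_err \<rho> f = (\<integral>zz. pos_part (1 - snd zz * f (fst zz)) \<partial>\<rho>)"

definition rademacher :: "real measure" where
  "rademacher = measure_pmf (pmf_of_set {-1, 1})"

definition sample_measure :: "nat \<Rightarrow> ((real^'d) \<times> real) measure \<Rightarrow> (nat \<Rightarrow> (real^'d) \<times> real) measure" where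
  "sample_measure m \<rho> = PiM {..<m} (\<lambda>_. \<rho>)"

definition Xstar :: "(real^'d^'d \<Rightarrow> real) \<Rightarrow> (real^'d) set \<Rightarrow> real" where
  "Xstar N X = Sup {dual_norm N (outer x' x) | x x'. x \<in> X \<and> x' \<in> X}"

definition rad_complexity ::
  "nat \<Rightarrow> ((real^'d) \<times> real) measure \<Rightarrow> (real^'d^'d \<Rightarrow> real) \<Rightarrow> (real^'d) set \<Rightarrow> real" where
  "rad_complexity m \<rho> N X =
     (\<integral>p. Sup ((\<lambda>xt. dual_norm N ((1 / real m) *\<^sub>R
          (\<Sum>i<m. (snd p i * snd (fst p i)) *\<^sub>R outer (fst (fst p i)) xt))) ` X)
      \<partial>(sample_measure m \<rho> \<Otimes>\<^sub>M PiM {..<m} (\<lambda>_. rademacher)))"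

end

theory Submission
  imports Defs
begin


lemma trace_inner: "trace (transpose B ** A) = inner B (A :: real^'d^'d)"
  unfolding trace_def transpose_def matrix_matrix_mult_def inner_vec_def
  apply (simp add: inner_real_def)
  apply (subst sum.swap)
  apply (simp add: mult.commute)
  done

lemma inner_outer: "inner (outer u v) A = KA A u v"
  unfolding outer_def KA_def inner_vec_def matrix_vector_mult_def
  by (simp add: sum_distrib_left mult_ac)

lemma outer_transpose: "transpose A = A \<Longrightarrow> KA A u v = KA A v u"
  unfolding KA_def inner_vec_def matrix_vector_mult_def
  apply (simp add: sum_distrib_left)
  apply (subst sum.swap)
  apply (rule sum.cong, simp)+
  by (metis (no_types, lifting) mult.commute mult.left_commute transpose_def vec_lambda_beta)

lemma outer_sum: "(\<Sum>i\<in>I. c i *\<^sub>R outer (u i) v) = outer (\<Sum>i\<in>I. c i *\<^sub>R u i) v"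
  unfolding outer_def by (simp add: vec_eq_iff sum_component sum_distrib_right mult.assoc)

lemma outer_scale: "a *\<^sub>R outer u v = outer (a *\<^sub>R u) v"
  unfolding outer_def by (simp add: vec_eq_iff mult.assoc)

lemma outer_diff: "outer u v - outer u' v = outer (u - u') v"
  unfolding outer_def by (simp add: vec_eq_iff algebra_simps)

context
  fixes N :: "real^'d^'d \<Rightarrow> real"
  assumes N: "is_matrix_norm N"
begin

lemma N_nonneg: "0 \<le> N A" using N unfolding is_matrix_norm_def by blast
lemma N_zero_iff: "N A = 0 \<longleftrightarrow> A = 0" using N unfolding is_matrix_norm_def by blast
lemma N_scale: "N (c *\<^sub>R A) = \<bar>c\<bar> * N A" using N unfolding is_matrix_norm_def by blast
lemma N_triangle: "N (A + B) \<le> N A + N B" using N unfolding is_matrix_norm_def by blast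
lemma N_0: "N 0 = 0" using N_zero_iff by simp
lemma N_uminus: "N (- A) = N A" using N_scale[of "-1" A] by simp

lemma N_convex: "convex_on UNIV N"
proof (rule convex_onI)
  fix t :: real and x y assume t: "0 < t" "t < 1"
  have "N ((1 - t) *\<^sub>R x + t *\<^sub>R y) \<le> N ((1 - t) *\<^sub>R x) + N (t *\<^sub>R y)" by (rule N_triangle)
  also have "\<dots> = (1 - t) * N x + t * N y" using t by (simp add: N_scale)
  finally show "N ((1 - t) *\<^sub>R x + t *\<^sub>R y) \<le> (1 - t) * N x + t * N y" .
qed simp

lemma N_cont: "continuous_on UNIV N"
  by (rule convex_on_continuous[OF open_UNIV N_convex])

lemma N_lower: "\<exists>c>0. \<forall>A. c * norm A \<le> N A"
proof -
  have "sphere (0::real^'d^'d) 1 \<noteq> {}"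
  proof -
    obtain b :: "real^'d^'d" where "b \<in> Basis" using nonempty_Basis by blast
    then have "norm b = 1" by simp
    then show ?thesis by auto
  qed
  then obtain A0 where A0: "A0 \<in> sphere 0 1" "\<forall>y\<in>sphere 0 1. N A0 \<le> N y"
    using continuous_attains_inf[OF compact_sphere _ continuous_on_subset[OF N_cont]] by blast
  have "A0 \<noteq> 0" using A0 by auto
  then have pos: "N A0 > 0" using N_nonneg[of A0] N_zero_iff[of A0] by linarith
  show ?thesis
  proof (intro exI[of _ "N A0"] conjI allI pos)
    fix A :: "real^'d^'d"
    show "N A0 * norm A \<le> N A"
    proof (cases "A = 0")
      case True then show ?thesis by (simp add: N_0)
    next
      case False
      then have "N A0 \<le> N ((1 / norm A) *\<^sub>R A)" using A0 by auto
      also have "\<dots> = N A / norm A" by (simp add: N_scale)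
      finally show ?thesis using False by (simp add: field_simps)
    qed
  qed
qed

definition cN where "cN = (SOME c. c > 0 \<and> (\<forall>A. c * norm A \<le> N A))"

lemma cN: "cN > 0" "cN * norm A \<le> N A"
  using someI_ex[OF N_lower] unfolding cN_def by auto

lemma dual_set_bdd: "bdd_above {trace (transpose B ** A) | A. N A \<le> 1}"
proof (rule bdd_aboveI)
  fix t assume "t \<in> {trace (transpose B ** A) | A. N A \<le> 1}"
  then obtain A where A: "t = inner B A" "N A \<le> 1" by (auto simp: trace_inner)
  have "t \<le> norm B * norm A" using A(1) norm_cauchy_schwarz by simp
  also have "norm A \<le> 1 / cN" using cN(2)[of A] A(2) cN(1) by (simp add: field_simps)
  then have "norm B * norm A \<le> norm B / cN" by (simp add: mult_left_mono divide_inverse)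
  finally show "t \<le> norm B / cN" .
qed

lemma dual_le: "dual_norm N B \<le> norm B / cN"
  unfolding dual_norm_def
proof (rule cSup_least)
  show "{trace (transpose B ** A) | A. N A \<le> 1} \<noteq> {}" by (auto intro!: exI[of _ 0] simp: N_0)
  fix t assume "t \<in> {trace (transpose B ** A) | A. N A \<le> 1}"
  then obtain A where A: "t = inner B A" "N A \<le> 1" by (auto simp: trace_inner)
  have "t \<le> norm B * norm A" using A(1) norm_cauchy_schwarz by simp
  also have "norm A \<le> 1 / cN" using cN(2)[of A] A(2) cN(1) by (simp add: field_simps)
  then have "norm B * norm A \<le> norm B / cN" by (simp add: mult_left_mono divide_inverse)
  finally show "t \<le> norm B / cN" .
qed

lemma dual_upper: "N A \<le> 1 \<Longrightarrow> inner B A \<le> dual_norm N B"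
  unfolding dual_norm_def
  by (rule cSup_upper[OF _ dual_set_bdd]) (auto simp: trace_inner)

lemma dual_nonneg: "0 \<le> dual_norm N B"
  using dual_upper[of 0 B] by (simp add: N_0)

lemma inner_le_dual: "inner B A \<le> N A * dual_norm N B"
proof (cases "A = 0")
  case True then show ?thesis by (simp add: N_0)
next
  case False
  then have pos: "N A > 0" using N_nonneg[of A] N_zero_iff[of A] by linarith
  have "inner B ((1 / N A) *\<^sub>R A) \<le> dual_norm N B"
    by (rule dual_upper) (use pos in \<open>simp add: N_scale\<close>)
  then show ?thesis using pos by (simp add: field_simps)
qed

lemma abs_inner_le_dual: "\<bar>inner B A\<bar> \<le> N A * dual_norm N B"
  using inner_le_dual[of B A] inner_le_dual[of B "-A"] by (simp add: N_uminus)

lemma dual_add: "dual_norm N (B + B') \<le> dual_norm N B + dual_norm N B'"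
  unfolding dual_norm_def[of N "B + B'"]
proof (rule cSup_least)
  show "{trace (transpose (B + B') ** A) | A. N A \<le> 1} \<noteq> {}" by (auto intro!: exI[of _ 0] simp: N_0)
  fix t assume "t \<in> {trace (transpose (B + B') ** A) | A. N A \<le> 1}"
  then obtain A where A: "t = inner (B + B') A" "N A \<le> 1" by (auto simp: trace_inner)
  then show "t \<le> dual_norm N B + dual_norm N B'"
    using dual_upper[OF A(2), of B] dual_upper[OF A(2), of B'] by (simp add: inner_add_left)
qed

lemma dual_lipschitz: "\<bar>dual_norm N B - dual_norm N B'\<bar> \<le> norm (B - B') / cN"
proof -
  have "dual_norm N B \<le> dual_norm N B' + dual_norm N (B - B')"
    using dual_add[of B' "B - B'"] by simp
  moreover have "dual_norm N B' \<le> dual_norm N B + dual_norm N (B' - B)"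
    using dual_add[of B "B' - B"] by simp
  moreover have "dual_norm N (B' - B) \<le> norm (B - B') / cN"
    using dual_le[of "B' - B"] by (simp add: norm_minus_commute)
  ultimately show ?thesis using dual_le[of "B - B'"] by linarith
qed

end


lemma bounded_integrable:
  assumes "finite_measure M" "f \<in> borel_measurable M" "\<And>x. x \<in> space M \<Longrightarrow> \<bar>f x\<bar> \<le> (K::real)"
  shows "integrable M f"
  using assms by (intro finite_measure.integrable_const_bound[where B=K]) auto

lemma mcdiarmid_mgf:
  fixes F :: "(nat \<Rightarrow> 'a) \<Rightarrow> real"
  assumes M: "prob_space M" and I: "finite I"
    and F: "F \<in> borel_measurable (PiM I (\<lambda>_. M))"
    and bnd: "\<And>x. x \<in> space (PiM I (\<lambda>_. M)) \<Longrightarrow> \<bar>F x\<bar> \<le> K"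
    and bd: "\<And>x i y y'. x \<in> space (PiM I (\<lambda>_. M)) \<Longrightarrow> i \<in> I \<Longrightarrow> y \<in> space M \<Longrightarrow> y' \<in> space M \<Longrightarrow>
                F (x(i:=y)) - F (x(i:=y')) \<le> c"
    and s: "s > 0"
  shows "(\<integral>\<^sup>+x. ennreal (exp (s * (F x - (\<integral>x. F x \<partial>PiM I (\<lambda>_. M))))) \<partial>PiM I (\<lambda>_. M))
           \<le> ennreal (exp (s\<^sup>2 * real (card I) * c\<^sup>2 / 8))"
  using I F bnd bd
proof (induction I arbitrary: F rule: finite_induct)
  case empty
  have "(\<integral>x. F x \<partial>PiM {} (\<lambda>_. M)) = F (\<lambda>_. undefined)"
    by (simp add: PiM_empty lebesgue_integral_count_space_finite)
  then show ?case by (simp add: PiM_empty nn_integral_count_space_finite)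
next
  case (insert i I)
  interpret M: prob_space M by (rule M)
  interpret P: product_prob_space "\<lambda>_::nat. M" by unfold_locales
  interpret PI: prob_space "PiM I (\<lambda>_. M)" by (rule prob_space_PiM) (simp add: M)
  interpret PII: prob_space "PiM (insert i I) (\<lambda>_. M)" by (rule prob_space_PiM) (simp add: M)
  note Fm[measurable] = insert.prems(1)
  define G where "G x = (\<integral>y. F (x(i:=y)) \<partial>M)" for x
  have upd: "x(i:=y) \<in> space (PiM (insert i I) (\<lambda>_. M))" if "x \<in> space (PiM I (\<lambda>_. M))" "y \<in> space M" for x y
    using that by (auto simp: space_PiM PiE_def extensional_def Pi_iff)
  have Fupd[measurable]: "(\<lambda>(x, y). F (x(i:=y))) \<in> borel_measurable (PiM I (\<lambda>_. M) \<Otimes>\<^sub>M M)"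
    using measurable_comp[OF measurable_add_dim[where I=I and M="\<lambda>_. M" and i=i] Fm] by (simp add: comp_def case_prod_unfold)
  have Gm[measurable]: "G \<in> borel_measurable (PiM I (\<lambda>_. M))"
    unfolding G_def by (rule M.borel_measurable_lebesgue_integral) (use Fupd in simp)
  have Fy_m: "(\<lambda>y. F (x(i:=y))) \<in> borel_measurable M" if "x \<in> space (PiM I (\<lambda>_. M))" for x
    using measurable_comp[OF measurable_component_update[OF that insert.hyps(2)] Fm] by (simp add: comp_def)
  have Fb: "\<bar>F (x(i:=y))\<bar> \<le> K" if "x \<in> space (PiM I (\<lambda>_. M))" "y \<in> space M" for x y
    using insert.prems(2)[OF upd[OF that]] .
  have Fb2: "F (x(i:=y)) \<le> K" "-K \<le> F (x(i:=y))" if "x \<in> space (PiM I (\<lambda>_. M))" "y \<in> space M" for x y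
    using Fb[OF that] unfolding abs_le_iff by linarith+
  have Fy_int: "integrable M (\<lambda>y. F (x(i:=y)))" if "x \<in> space (PiM I (\<lambda>_. M))" for x
    by (rule bounded_integrable[OF _ Fy_m[OF that], of K]) (auto intro: M.finite_measure_axioms Fb[OF that])
  have Gb: "\<bar>G x\<bar> \<le> K" if x: "x \<in> space (PiM I (\<lambda>_. M))" for x
  proof -
    have "G x \<le> (\<integral>y. K \<partial>M)" unfolding G_def
      by (rule integral_mono[OF Fy_int[OF x]]) (use Fb[OF x] in \<open>auto simp: abs_le_iff dest!: Fb2[OF x]\<close>)
    moreover have "(\<integral>y. -K \<partial>M) \<le> G x" unfolding G_def
      by (rule integral_mono[OF _ Fy_int[OF x]]) (use Fb[OF x] in \<open>auto simp: abs_le_iff dest!: Fb2[OF x]\<close>)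
    ultimately show ?thesis by (simp add: M.prob_space abs_le_iff)
  qed
  have Gbd: "G (x(j:=y)) - G (x(j:=y')) \<le> c"
    if x: "x \<in> space (PiM I (\<lambda>_. M))" and j: "j \<in> I" and y: "y \<in> space M" "y' \<in> space M" for x j y y'
  proof -
    have xj: "x(j:=y) \<in> space (PiM I (\<lambda>_. M))" "x(j:=y') \<in> space (PiM I (\<lambda>_. M))"
      using x j y by (auto simp: space_PiM PiE_def extensional_def Pi_iff)
    have ij: "i \<noteq> j" using j insert.hyps by auto
    have "G (x(j:=y)) - G (x(j:=y')) = (\<integral>u. F ((x(j:=y))(i:=u)) - F ((x(j:=y'))(i:=u)) \<partial>M)"
      unfolding G_def by (rule Bochner_Integration.integral_diff[symmetric]) (use Fy_int xj in auto)
    also have "\<dots> \<le> (\<integral>u. c \<partial>M)"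
    proof (rule integral_mono)
      show "integrable M (\<lambda>u. F ((x(j:=y))(i:=u)) - F ((x(j:=y'))(i:=u)))" using Fy_int xj by auto
      fix u assume u: "u \<in> space M"
      have "(x(j:=y))(i:=u) = (x(i:=u))(j:=y)" "(x(j:=y'))(i:=u) = (x(i:=u))(j:=y')" using ij by auto
      moreover have "x(i:=u) \<in> space (PiM (insert i I) (\<lambda>_. M))" using upd[OF x u] .
      moreover have "F ((x(i:=u))(j:=y)) - F ((x(i:=u))(j:=y')) \<le> c"
        by (rule insert.prems(3)[OF upd[OF x u]]) (use j y in auto)
      ultimately show "F ((x(j:=y))(i:=u)) - F ((x(j:=y'))(i:=u)) \<le> c" by simp
    qed simp
    also have "\<dots> = c" by (simp add: M.prob_space)
    finally show ?thesis .
  qed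
  have IH: "(\<integral>\<^sup>+x. ennreal (exp (s * (G x - (\<integral>x. G x \<partial>PiM I (\<lambda>_. M))))) \<partial>PiM I (\<lambda>_. M))
           \<le> ennreal (exp (s\<^sup>2 * real (card I) * c\<^sup>2 / 8))"
    by (rule insert.IH[OF Gm Gb Gbd])
  have Fint: "integrable (PiM (insert i I) (\<lambda>_. M)) F"
    by (rule bounded_integrable[OF _ Fm, of K]) (auto intro: PII.finite_measure_axioms insert.prems(2))
  have EF: "(\<integral>x. F x \<partial>PiM (insert i I) (\<lambda>_. M)) = (\<integral>x. G x \<partial>PiM I (\<lambda>_. M))"
    unfolding G_def by (rule P.product_integral_insert[OF insert.hyps(1,2) Fint])
  define EG where "EG = (\<integral>x. G x \<partial>PiM I (\<lambda>_. M))"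
  have inner: "(\<integral>\<^sup>+y. ennreal (exp (s * (F (x(i:=y)) - EG))) \<partial>M)
       \<le> ennreal (exp (s * (G x - EG))) * ennreal (exp (s\<^sup>2 * c\<^sup>2 / 8))"
    if x: "x \<in> space (PiM I (\<lambda>_. M))" for x
  proof -
    define S where "S = (\<lambda>y. F (x(i:=y))) ` space M"
    define a where "a = Inf S"
    have Sne: "S \<noteq> {}" unfolding S_def using M.not_empty by auto
    have Sbdd: "bdd_below S" unfolding S_def bdd_below_def
      using Fb[OF x] by (force intro!: exI[of _ "-K"] simp: abs_le_iff)
    have inI: "F (x(i:=y)) \<in> {a..a+c}" if y: "y \<in> space M" for y
      unfolding atLeastAtMost_iff
    proof
      show "a \<le> F (x(i:=y))" unfolding a_def by (rule cInf_lower[OF _ Sbdd]) (use y S_def in auto)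
      have "F (x(i:=y)) - c \<le> a" unfolding a_def
      proof (rule cInf_greatest[OF Sne])
        fix t assume "t \<in> S"
        then obtain y' where "y' \<in> space M" "t = F (x(i:=y'))" unfolding S_def by auto
        moreover have "F ((x(i:=y))(i:=y)) - F ((x(i:=y))(i:=y')) \<le> c"
          by (rule insert.prems(3)[OF upd[OF x y]]) (use \<open>y' \<in> space M\<close> y in auto)
        ultimately show "F (x(i:=y)) - c \<le> t" by simp
      qed
      then show "F (x(i:=y)) \<le> a + c" by simp
    qed
    interpret H: interval_bounded_random_variable M "\<lambda>y. F (x(i:=y))" a "a + c"
      by unfold_locales (use Fy_m[OF x] inI in \<open>auto intro!: AE_I2\<close>)
    have "(\<integral>\<^sup>+y. ennreal (exp (s * (F (x(i:=y)) - EG))) \<partial>M)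
        = (\<integral>\<^sup>+y. ennreal (exp (s * (G x - EG))) * ennreal (exp (s * (F (x(i:=y)) - G x))) \<partial>M)"
      by (rule nn_integral_cong) (simp add: ennreal_mult'[symmetric] exp_add[symmetric] algebra_simps)
    also have "\<dots> = ennreal (exp (s * (G x - EG))) * (\<integral>\<^sup>+y. ennreal (exp (s * (F (x(i:=y)) - G x))) \<partial>M)"
      by (rule nn_integral_cmult) (use Fy_m[OF x] in measurable)
    also have "(\<integral>\<^sup>+y. ennreal (exp (s * (F (x(i:=y)) - G x))) \<partial>M) \<le> ennreal (exp (s\<^sup>2 * c\<^sup>2 / 8))"
      using H.Hoeffdings_lemma_nn_integral[OF s] unfolding G_def by simp
    finally show ?thesis by (simp add: mult_left_mono)
  qed
  have "(\<integral>\<^sup>+x. ennreal (exp (s * (F x - (\<integral>x. F x \<partial>PiM (insert i I) (\<lambda>_. M))))) \<partial>PiM (insert i I) (\<lambda>_. M))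
      = (\<integral>\<^sup>+x. (\<integral>\<^sup>+y. ennreal (exp (s * (F (x(i:=y)) - EG))) \<partial>M) \<partial>PiM I (\<lambda>_. M))"
    unfolding EF EG_def by (rule P.product_nn_integral_insert[OF insert.hyps(1,2)]) measurable
  also have "\<dots> \<le> (\<integral>\<^sup>+x. ennreal (exp (s\<^sup>2 * c\<^sup>2 / 8)) * ennreal (exp (s * (G x - EG))) \<partial>PiM I (\<lambda>_. M))"
    by (rule nn_integral_mono) (use inner in \<open>simp add: mult.commute\<close>)
  also have "\<dots> = ennreal (exp (s\<^sup>2 * c\<^sup>2 / 8)) * (\<integral>\<^sup>+x. ennreal (exp (s * (G x - EG))) \<partial>PiM I (\<lambda>_. M))"
    by (rule nn_integral_cmult) measurable
  also have "\<dots> \<le> ennreal (exp (s\<^sup>2 * c\<^sup>2 / 8)) * ennreal (exp (s\<^sup>2 * real (card I) * c\<^sup>2 / 8))"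
    using IH unfolding EG_def by (rule mult_left_mono) simp
  also have "\<dots> = ennreal (exp (s\<^sup>2 * real (card (insert i I)) * c\<^sup>2 / 8))"
    using insert.hyps by (simp add: ennreal_mult'[symmetric] exp_add[symmetric] algebra_simps add_divide_distrib)
  finally show ?case .
qed


definition sgns :: "nat set \<Rightarrow> (nat \<Rightarrow> real) set" where
  "sgns I = PiE I (\<lambda>_. {-1, 1})"

definition avg :: "nat set \<Rightarrow> ((nat \<Rightarrow> real) \<Rightarrow> real) \<Rightarrow> real" where
  "avg I F = (\<Sum>\<sigma>\<in>sgns I. F \<sigma>) / 2 ^ card I"

lemma finite_sgns: "finite I \<Longrightarrow> finite (sgns I)"
  unfolding sgns_def by (intro finite_PiE) auto

lemma avg_empty: "avg {} F = F (\<lambda>_. undefined)"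
  by (simp add: avg_def sgns_def)

lemma avg_insert:
  assumes I: "finite I" "i \<notin> I"
  shows "avg (insert i I) F = (avg I (\<lambda>\<sigma>. F (\<sigma>(i:=1))) + avg I (\<lambda>\<sigma>. F (\<sigma>(i:=-1)))) / 2"
proof -
  have eq: "sgns (insert i I) = (\<lambda>(s, \<sigma>). \<sigma>(i:=s)) ` ({-1, 1} \<times> sgns I)"
    unfolding sgns_def by (rule PiE_insert_eq)
  have inj: "inj_on (\<lambda>(s, \<sigma>). \<sigma>(i:=s)) ({-1, 1} \<times> sgns I)"
  proof (rule inj_onI, clarsimp)
    fix s \<sigma> s' \<sigma>' assume "\<sigma> \<in> sgns I" "\<sigma>' \<in> sgns I" "\<sigma>(i:=s) = \<sigma>'(i:=s')"
    then have u: "\<sigma> i = undefined" "\<sigma>' i = undefined" and e: "\<sigma>(i:=s) = \<sigma>'(i:=s')"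
      using I unfolding sgns_def by (auto simp: PiE_def extensional_def)
    have "s = s'" using fun_cong[OF e, of i] by simp
    moreover have "\<sigma> j = \<sigma>' j" for j
      using fun_cong[OF e, of j] u by (cases "j = i") auto
    ultimately show "s = s' \<and> \<sigma> = \<sigma>'" by auto
  qed
  have "(\<Sum>\<sigma>\<in>sgns (insert i I). F \<sigma>) = (\<Sum>p\<in>{-1, 1} \<times> sgns I. F ((\<lambda>(s, \<sigma>). \<sigma>(i:=s)) p))"
    unfolding eq by (rule sum.reindex[OF inj, unfolded comp_def])
  also have "\<dots> = (\<Sum>s\<in>{-1,1}. \<Sum>\<sigma>\<in>sgns I. F (\<sigma>(i:=s)))"
    by (subst sum.cartesian_product) (simp add: case_prod_unfold)
  also have "\<dots> = (\<Sum>\<sigma>\<in>sgns I. F (\<sigma>(i:=1))) + (\<Sum>\<sigma>\<in>sgns I. F (\<sigma>(i:=-1)))" by simp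
  finally show ?thesis using I unfolding avg_def by (simp add: field_simps)
qed

lemma avg_mono: "finite I \<Longrightarrow> (\<And>\<sigma>. \<sigma> \<in> sgns I \<Longrightarrow> F \<sigma> \<le> G \<sigma>) \<Longrightarrow> avg I F \<le> avg I G"
  unfolding avg_def by (intro divide_right_mono sum_mono) auto

lemma avg_integral:
  fixes F :: "(nat \<Rightarrow> real) \<Rightarrow> 'a \<Rightarrow> real"
  assumes "finite I" "\<And>\<sigma>. integrable M (F \<sigma>)"
  shows "(\<integral>x. avg I (\<lambda>\<sigma>. F \<sigma> x) \<partial>M) = avg I (\<lambda>\<sigma>. \<integral>x. F \<sigma> x \<partial>M)"
  unfolding avg_def using assms by (simp add: integral_sum)

lemma avg_measurable[measurable (raw)]:
  "finite I \<Longrightarrow> (\<And>\<sigma>. (\<lambda>x. F \<sigma> x) \<in> borel_measurable M) \<Longrightarrow> (\<lambda>x. avg I (\<lambda>\<sigma>. F \<sigma> x)) \<in> borel_measurable M"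
  unfolding avg_def by (auto intro!: borel_measurable_sum borel_measurable_divide)

lemma avg_integrable:
  "finite I \<Longrightarrow> (\<And>\<sigma>. integrable M (F \<sigma>)) \<Longrightarrow> integrable M (\<lambda>x. avg I (\<lambda>\<sigma>. F \<sigma> x))"
  unfolding avg_def by auto

lemma avg_bound: "finite I \<Longrightarrow> (\<And>\<sigma>. \<sigma> \<in> sgns I \<Longrightarrow> \<bar>F \<sigma>\<bar> \<le> C) \<Longrightarrow> \<bar>avg I F\<bar> \<le> C"
proof -
  assume I: "finite I" and b: "\<And>\<sigma>. \<sigma> \<in> sgns I \<Longrightarrow> \<bar>F \<sigma>\<bar> \<le> C"
  have c: "card (sgns I) = 2 ^ card I" unfolding sgns_def using I by (simp add: card_PiE numeral_2_eq_2)
  have "\<bar>\<Sum>\<sigma>\<in>sgns I. F \<sigma>\<bar> \<le> (\<Sum>\<sigma>\<in>sgns I. C)"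
    by (rule order.trans[OF sum_abs sum_mono]) (use b in auto)
  then show ?thesis unfolding avg_def using c by (simp add: field_simps)
qed

context
  fixes D :: "'w set"
  assumes D: "finite D" "D \<noteq> {}"
begin

definition MX :: "('w \<Rightarrow> real) \<Rightarrow> real" where "MX h = Max (h ` D)"

lemma MX_ge: "w \<in> D \<Longrightarrow> h w \<le> MX h"
  unfolding MX_def using D by (intro Max_ge) auto

lemma MX_le_iff: "MX h \<le> c \<longleftrightarrow> (\<forall>w\<in>D. h w \<le> c)"
  unfolding MX_def using D by (subst Max_le_iff) auto

lemma MX_attained: "\<exists>w\<in>D. MX h = h w"
proof -
  have "Max (h ` D) \<in> h ` D" by (rule Max_in) (use D in auto)
  then show ?thesis unfolding MX_def by auto
qed

lemma MX_mono: "(\<And>w. w \<in> D \<Longrightarrow> h w \<le> h' w) \<Longrightarrow> MX h \<le> MX h'"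
proof -
  assume a: "\<And>w. w \<in> D \<Longrightarrow> h w \<le> h' w"
  show ?thesis unfolding MX_le_iff
  proof
    fix w assume w: "w \<in> D"
    show "h w \<le> MX h'" using a[OF w] MX_ge[OF w, of h'] by linarith
  qed
qed

lemma MX_add: "MX (\<lambda>w. h w + h' w) \<le> MX h + MX h'"
  unfolding MX_le_iff
proof
  fix w assume w: "w \<in> D"
  show "h w + h' w \<le> MX h + MX h'" using MX_ge[OF w, of h] MX_ge[OF w, of h'] by linarith
qed

lemma MX_scale: "c \<ge> 0 \<Longrightarrow> MX (\<lambda>w. c * h w) = c * MX h"
proof -
  assume c: "c \<ge> 0"
  obtain w where w: "w \<in> D" "MX h = h w" using MX_attained by blast
  obtain w' where w': "w' \<in> D" "MX (\<lambda>w. c * h w) = c * h w'" using MX_attained by blast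
  have "c * h w \<le> c * h w'" using MX_ge[of w "\<lambda>w. c * h w"] w w' by simp
  moreover have "c * h w' \<le> c * h w" using MX_ge[of w' h] w w' c by (simp add: mult_left_mono)
  moreover have "c * MX h = c * h w" using w by simp
  ultimately show ?thesis using w' by linarith
qed

lemma MX_abs: "(\<And>w. w \<in> D \<Longrightarrow> \<bar>h w\<bar> \<le> C) \<Longrightarrow> \<bar>MX h\<bar> \<le> C"
proof -
  assume a: "\<And>w. w \<in> D \<Longrightarrow> \<bar>h w\<bar> \<le> C"
  obtain w where "w \<in> D" "MX h = h w" using MX_attained by blast
  then show ?thesis using a by simp
qed

lemma MX_measurable[measurable (raw)]:
  "(\<And>w. (\<lambda>x. f w x) \<in> borel_measurable M) \<Longrightarrow> (\<lambda>x. MX (\<lambda>w. f w x)) \<in> borel_measurable M"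
  unfolding MX_def by (rule borel_measurable_Max[OF D(1)]) auto

lemma MX_bound_sum: "\<bar>MX (\<lambda>w. f w x)\<bar> \<le> (\<Sum>w\<in>D. \<bar>f w x\<bar>)"
  by (rule MX_abs) (rule member_le_sum, auto simp: D)

lemma MX_integrable:
  assumes "\<And>w. w \<in> D \<Longrightarrow> integrable M (f w)"
  shows "integrable M (\<lambda>x. MX (\<lambda>w. f w x))"
proof (rule Bochner_Integration.integrable_bound[of _ "\<lambda>x. \<Sum>w\<in>D. \<bar>f w x\<bar>"])
  show "integrable M (\<lambda>x. \<Sum>w\<in>D. \<bar>f w x\<bar>)" using assms by auto
  show "(\<lambda>x. MX (\<lambda>w. f w x)) \<in> borel_measurable M"
    unfolding MX_def by (rule borel_measurable_Max[OF D(1)]) (use assms in auto)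
  show "AE x in M. norm (MX (\<lambda>w. f w x)) \<le> norm (\<Sum>w\<in>D. \<bar>f w x\<bar>)"
    using MX_bound_sum by (auto intro!: AE_I2 order.trans[OF _ abs_ge_self])
qed

lemma MX_integral:
  assumes "\<And>w. w \<in> D \<Longrightarrow> integrable M (f w)"
  shows "MX (\<lambda>w. \<integral>x. f w x \<partial>M) \<le> (\<integral>x. MX (\<lambda>w. f w x) \<partial>M)"
  unfolding MX_le_iff
proof
  fix w assume w: "w \<in> D"
  show "(\<integral>x. f w x \<partial>M) \<le> (\<integral>x. MX (\<lambda>w. f w x) \<partial>M)"
    by (rule integral_mono[OF assms[OF w] MX_integrable[OF assms]]) (auto intro: MX_ge[OF w])
qed

end


lemma bounded_integrable':
  assumes "finite_measure M" "f \<in> borel_measurable M" "\<And>x. x \<in> space M \<Longrightarrow> \<bar>f x\<bar> \<le> (K::real)"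
  shows "integrable M f"
  using assms by (intro finite_measure.integrable_const_bound[where B=K]) auto

lemma prob_integral_abs_le:
  assumes "prob_space M" "f \<in> borel_measurable M" "\<And>x. x \<in> space M \<Longrightarrow> \<bar>f x\<bar> \<le> (K::real)"
  shows "\<bar>\<integral>x. f x \<partial>M\<bar> \<le> K"
proof -
  interpret prob_space M by fact
  have int: "integrable M f" by (rule bounded_integrable'[OF _ assms(2,3)]) (auto intro: finite_measure_axioms)
  have "\<bar>\<integral>x. f x \<partial>M\<bar> \<le> (\<integral>x. \<bar>f x\<bar> \<partial>M)" using integral_norm_bound[of M f] by simp
  also have "\<dots> \<le> (\<integral>x. K \<partial>M)" by (rule integral_mono) (use int assms(3) in auto)
  finally show ?thesis by (simp add: prob_space)
qed

lemma sum_abs_bound: "(\<And>j. j \<in> I \<Longrightarrow> \<bar>f j\<bar> \<le> (C::real)) \<Longrightarrow> \<bar>\<Sum>j\<in>I. f j\<bar> \<le> real (card I) * C"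
proof -
  assume a: "\<And>j. j \<in> I \<Longrightarrow> \<bar>f j\<bar> \<le> C"
  have "\<bar>\<Sum>j\<in>I. f j\<bar> \<le> (\<Sum>j\<in>I. \<bar>f j\<bar>)" by (rule sum_abs)
  also have "\<dots> \<le> (\<Sum>j\<in>I. C)" by (rule sum_mono) (use a in auto)
  finally show ?thesis by simp
qed

lemma meas_comp_PiM:
  "j \<in> I \<Longrightarrow> f \<in> borel_measurable M \<Longrightarrow> (\<lambda>x. f (x j)) \<in> borel_measurable (PiM I (\<lambda>_. M))"
  by (erule measurable_compose[OF measurable_component_singleton])

lemma meas_comp_PiM_fst:
  "j \<in> I \<Longrightarrow> f \<in> borel_measurable M \<Longrightarrow> (\<lambda>p. f (fst p j)) \<in> borel_measurable (PiM I (\<lambda>_. M) \<Otimes>\<^sub>M N)"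
  by (rule measurable_compose[OF measurable_fst meas_comp_PiM])

lemma meas_comp_snd:
  "f \<in> borel_measurable M \<Longrightarrow> (\<lambda>p. f (snd p)) \<in> borel_measurable (N \<Otimes>\<^sub>M M)"
  by (rule measurable_compose[OF measurable_snd])

locale symm_setup =
  fixes M :: "'a measure" and D :: "'w set" and g :: "'w \<Rightarrow> 'a \<Rightarrow> real" and K :: real
  assumes M: "prob_space M" and D: "finite D" "D \<noteq> {}"
    and gm[measurable]: "\<And>w. g w \<in> borel_measurable M"
    and gb: "\<And>w a. w \<in> D \<Longrightarrow> a \<in> space M \<Longrightarrow> \<bar>g w a\<bar> \<le> K"
begin

interpretation M: prob_space M by (rule M)
interpretation P: product_prob_space "\<lambda>_::nat. M" by unfold_locales

definition Lg where "Lg w = (\<integral>b. g w b \<partial>M)"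

lemma Lg_bound: "w \<in> D \<Longrightarrow> \<bar>Lg w\<bar> \<le> K"
  unfolding Lg_def by (rule prob_integral_abs_le[OF M gm gb])

lemma g_int: "w \<in> D \<Longrightarrow> integrable M (g w)"
  by (rule bounded_integrable'[OF _ gm gb]) (auto intro: M.finite_measure_axioms)

lemma K_nonneg: "0 \<le> K"
proof -
  obtain w where "w \<in> D" using D by auto
  moreover obtain a where "a \<in> space M" using M.not_empty by auto
  ultimately show ?thesis using gb[of w a] by linarith
qed

lemma PI_prob: "prob_space (PiM I (\<lambda>_. M))" by (rule prob_space_PiM) (simp add: M)

lemma single_coord:
  fixes Q :: "'w \<Rightarrow> real"
  shows "(\<integral>a. MX D (\<lambda>w. Lg w - g w a + Q w) \<partial>M)
     \<le> (\<integral>a. (MX D (\<lambda>w. 2 * g w a + Q w) + MX D (\<lambda>w. - 2 * g w a + Q w)) / 2 \<partial>M)"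
proof -
  define CR where "CR = (\<Sum>w\<in>D. \<bar>Q w\<bar>)"
  have QR: "\<bar>Q w\<bar> \<le> CR" if "w \<in> D" for w unfolding CR_def by (rule member_le_sum) (use that D in auto)
  have intw: "integrable M (\<lambda>a. c * g w a + Q w)" if "w \<in> D" for w c
    using g_int[OF that] by auto
  have intp: "integrable M (\<lambda>a. MX D (\<lambda>w. c * g w a + Q w))" for c
    by (rule MX_integrable[OF D]) (rule intw)
  have pt: "MX D (\<lambda>w. Lg w - g w a + Q w) \<le> (MX D (\<lambda>w. 2 * Lg w + Q w) + MX D (\<lambda>w. - 2 * g w a + Q w)) / 2" for a
  proof -
    have "MX D (\<lambda>w. Lg w - g w a + Q w) = MX D (\<lambda>w. (1/2) * (2 * Lg w + Q w) + (1/2) * (- 2 * g w a + Q w))"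
      by (simp add: algebra_simps)
    also have "\<dots> \<le> MX D (\<lambda>w. (1/2) * (2 * Lg w + Q w)) + MX D (\<lambda>w. (1/2) * (- 2 * g w a + Q w))"
      by (rule MX_add[OF D])
    also have "\<dots> = (MX D (\<lambda>w. 2 * Lg w + Q w) + MX D (\<lambda>w. - 2 * g w a + Q w)) / 2"
      using MX_scale[OF D, of "1/2" "\<lambda>w. 2 * Lg w + Q w"] MX_scale[OF D, of "1/2" "\<lambda>w. - 2 * g w a + Q w"]
      by simp
    finally show ?thesis .
  qed
  have C: "MX D (\<lambda>w. 2 * Lg w + Q w) \<le> (\<integral>b. MX D (\<lambda>w. 2 * g w b + Q w) \<partial>M)"
  proof -
    have "MX D (\<lambda>w. 2 * Lg w + Q w) = MX D (\<lambda>w. \<integral>b. 2 * g w b + Q w \<partial>M)"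
    proof -
      have "(\<integral>b. 2 * g w b + Q w \<partial>M) = 2 * Lg w + Q w" if "w \<in> D" for w
        using g_int[OF that] unfolding Lg_def by (simp add: M.prob_space)
      then show ?thesis unfolding MX_def[OF D] by (intro arg_cong[where f=Max] image_cong) auto
    qed
    also have "\<dots> \<le> (\<integral>b. MX D (\<lambda>w. 2 * g w b + Q w) \<partial>M)"
      by (rule MX_integral[OF D]) (rule intw)
    finally show ?thesis .
  qed
  have "(\<integral>a. MX D (\<lambda>w. Lg w - g w a + Q w) \<partial>M)
      \<le> (\<integral>a. (MX D (\<lambda>w. 2 * Lg w + Q w) + MX D (\<lambda>w. - 2 * g w a + Q w)) / 2 \<partial>M)"
  proof (rule integral_mono[OF _ _ pt])
    show "integrable M (\<lambda>a. MX D (\<lambda>w. Lg w - g w a + Q w))"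
      by (rule MX_integrable[OF D]) (use g_int in auto)
    show "integrable M (\<lambda>a. (MX D (\<lambda>w. 2 * Lg w + Q w) + MX D (\<lambda>w. - 2 * g w a + Q w)) / 2)"
      using intp[of "-2"] by auto
  qed
  also have "\<dots> = (MX D (\<lambda>w. 2 * Lg w + Q w) + (\<integral>a. MX D (\<lambda>w. - 2 * g w a + Q w) \<partial>M)) / 2"
    using intp[of "-2"] by (simp add: M.prob_space)
  also have "\<dots> \<le> ((\<integral>b. MX D (\<lambda>w. 2 * g w b + Q w) \<partial>M) + (\<integral>a. MX D (\<lambda>w. - 2 * g w a + Q w) \<partial>M)) / 2"
    using C by simp
  also have "\<dots> = (\<integral>a. (MX D (\<lambda>w. 2 * g w a + Q w) + MX D (\<lambda>w. - 2 * g w a + Q w)) / 2 \<partial>M)"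
    using intp[of "-2"] intp[of 2] by simp
  finally show ?thesis .
qed


lemma sum_upd_insert:
  assumes "i \<notin> I" "finite I"
  shows "(\<Sum>j\<in>insert i I. h j ((x(i:=a)) j)) = h i a + (\<Sum>j\<in>I. h j (x j))"
proof -
  have "(\<Sum>j\<in>I. h j ((x(i:=a)) j)) = (\<Sum>j\<in>I. h j (x j))"
    by (rule sum.cong) (use assms in auto)
  then show ?thesis using assms by simp
qed

lemma int_comp: "j \<in> I \<Longrightarrow> w \<in> D \<Longrightarrow> integrable (PiM I (\<lambda>_. M)) (\<lambda>x. g w (x j))"
  by (rule bounded_integrable'[where K=K])
     (auto intro: prob_space.finite_measure PI_prob meas_comp_PiM gb simp: space_PiM PiE_def Pi_iff)

lemma int_fst_comp: "j \<in> I \<Longrightarrow> w \<in> D \<Longrightarrow> integrable (PiM I (\<lambda>_. M) \<Otimes>\<^sub>M M) (\<lambda>p. g w (fst p j))"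
proof -
  assume j: "j \<in> I" and w: "w \<in> D"
  interpret PPM: pair_prob_space "PiM I (\<lambda>_. M)" M
    by (intro pair_prob_space.intro pair_sigma_finite.intro) (auto intro: PI_prob M prob_space_imp_sigma_finite)
  show ?thesis
    by (rule bounded_integrable'[where K=K])
       (auto intro!: PPM.P.finite_measure_axioms meas_comp_PiM_fst[OF j gm] gb[OF w]
             simp: space_pair_measure space_PiM PiE_def Pi_iff j)
qed

lemma int_snd_comp: "w \<in> D \<Longrightarrow> integrable (PiM I (\<lambda>_. M) \<Otimes>\<^sub>M M) (\<lambda>p. g w (snd p))"
proof -
  assume w: "w \<in> D"
  interpret PPM: pair_prob_space "PiM I (\<lambda>_. M)" M
    by (intro pair_prob_space.intro pair_sigma_finite.intro) (auto intro: PI_prob M prob_space_imp_sigma_finite)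
  show ?thesis
    by (rule bounded_integrable'[where K=K])
       (auto intro!: PPM.P.finite_measure_axioms meas_comp_snd[OF gm] gb[OF w] simp: space_pair_measure)
qed

lemmas intS = Bochner_Integration.integrable_add Bochner_Integration.integrable_sum
  Bochner_Integration.integrable_diff integrable_mult_right

lemma symm:
  assumes I: "finite I"
  shows "(\<integral>x. MX D (\<lambda>w. (\<Sum>j\<in>I. Lg w - g w (x j)) + R w) \<partial>PiM I (\<lambda>_. M))
    \<le> (\<integral>x. avg I (\<lambda>\<sigma>. MX D (\<lambda>w. (\<Sum>j\<in>I. 2 * \<sigma> j * g w (x j)) + R w)) \<partial>PiM I (\<lambda>_. M))"
  using I
proof (induction I arbitrary: R rule: finite_induct)
  case empty
  show ?case by (simp add: PiM_empty lebesgue_integral_count_space_finite avg_empty)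
next
  case (insert i I)
  let ?P = "PiM I (\<lambda>_. M)"
  let ?P' = "PiM (insert i I) (\<lambda>_. M)"
  interpret PP: prob_space ?P by (rule PI_prob)
  interpret PP': prob_space ?P' by (rule PI_prob)
  interpret PPM: pair_prob_space ?P M
    by (intro pair_prob_space.intro pair_sigma_finite.intro) (auto intro: PI_prob M prob_space_imp_sigma_finite)
  define H where "H s x a = MX D (\<lambda>w. (\<Sum>j\<in>I. Lg w - g w (x j)) + (2 * s * g w a + R w))" for s :: real and x a
  define G where "G s x a = avg I (\<lambda>\<sigma>. MX D (\<lambda>w. (\<Sum>j\<in>I. 2 * \<sigma> j * g w (x j)) + (2 * s * g w a + R w)))" for s :: real and x a
  have intH: "integrable (?P \<Otimes>\<^sub>M M) (\<lambda>p. (H 1 (fst p) (snd p) + H (-1) (fst p) (snd p)) / 2)"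
    unfolding H_def
    by (intro integrable_divide Bochner_Integration.integrable_add MX_integrable[OF D] intS
        PPM.P.integrable_const int_fst_comp int_snd_comp insert.hyps; assumption)
  have intG: "integrable (?P \<Otimes>\<^sub>M M) (\<lambda>p. (G 1 (fst p) (snd p) + G (-1) (fst p) (snd p)) / 2)"
    unfolding G_def
    by (intro integrable_divide Bochner_Integration.integrable_add avg_integrable insert.hyps MX_integrable[OF D] intS
        PPM.P.integrable_const int_fst_comp int_snd_comp; assumption)
  have intL: "integrable ?P' (\<lambda>x. MX D (\<lambda>w. (\<Sum>j\<in>insert i I. Lg w - g w (x j)) + R w))"
    by (intro MX_integrable[OF D] intS PP'.integrable_const int_comp insert.hyps; assumption)
  have intR: "integrable ?P' (\<lambda>x. avg (insert i I) (\<lambda>\<sigma>. MX D (\<lambda>w. (\<Sum>j\<in>insert i I. 2 * \<sigma> j * g w (x j)) + R w)))"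
    by (intro avg_integrable MX_integrable[OF D] intS PP'.integrable_const int_comp finite.insertI insert.hyps; assumption)
  have intL2: "integrable (?P \<Otimes>\<^sub>M M) (\<lambda>p. MX D (\<lambda>w. Lg w - g w (snd p) + ((\<Sum>j\<in>I. Lg w - g w (fst p j)) + R w)))"
    by (intro MX_integrable[OF D] intS PPM.P.integrable_const int_fst_comp int_snd_comp insert.hyps; assumption)
  have eqL: "(\<Sum>j\<in>insert i I. Lg w - g w ((x(i:=a)) j)) + R w = Lg w - g w a + ((\<Sum>j\<in>I. Lg w - g w (x j)) + R w)" for x a w
    using sum_upd_insert[OF insert.hyps(2,1), where h="\<lambda>j v. Lg w - g w v" and x=x and a=a] by simp
  have "(\<integral>x. MX D (\<lambda>w. (\<Sum>j\<in>insert i I. Lg w - g w (x j)) + R w) \<partial>?P')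
      = (\<integral>x. \<integral>a. MX D (\<lambda>w. (\<Sum>j\<in>insert i I. Lg w - g w ((x(i:=a)) j)) + R w) \<partial>M \<partial>?P)"
    by (rule P.product_integral_insert[OF insert.hyps(1,2) intL])
  also have "\<dots> = (\<integral>x. \<integral>a. MX D (\<lambda>w. Lg w - g w a + ((\<Sum>j\<in>I. Lg w - g w (x j)) + R w)) \<partial>M \<partial>?P)"
    by (simp only: eqL)
  also have "\<dots> \<le> (\<integral>x. \<integral>a. (H 1 x a + H (-1) x a) / 2 \<partial>M \<partial>?P)"
  proof (rule integral_mono)
    show "integrable ?P (\<lambda>x. \<integral>a. MX D (\<lambda>w. Lg w - g w a + ((\<Sum>j\<in>I. Lg w - g w (x j)) + R w)) \<partial>M)"
      by (rule PPM.integrable_fst[where f="\<lambda>x a. MX D (\<lambda>w. Lg w - g w a + ((\<Sum>j\<in>I. Lg w - g w (x j)) + R w))", unfolded case_prod_unfold])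
         (rule intL2)
    show "integrable ?P (\<lambda>x. \<integral>a. (H 1 x a + H (-1) x a) / 2 \<partial>M)"
      by (rule PPM.integrable_fst[where f="\<lambda>x a. (H 1 x a + H (-1) x a) / 2", unfolded case_prod_unfold]) (rule intH)
    fix x
    have "(\<integral>a. MX D (\<lambda>w. Lg w - g w a + ((\<Sum>j\<in>I. Lg w - g w (x j)) + R w)) \<partial>M)
       \<le> (\<integral>a. (MX D (\<lambda>w. 2 * g w a + ((\<Sum>j\<in>I. Lg w - g w (x j)) + R w)) + MX D (\<lambda>w. - 2 * g w a + ((\<Sum>j\<in>I. Lg w - g w (x j)) + R w))) / 2 \<partial>M)"
      by (rule single_coord)
    also have "\<dots> = (\<integral>a. (H 1 x a + H (-1) x a) / 2 \<partial>M)"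
    proof -
      have "MX D (\<lambda>w. 2 * g w a + ((\<Sum>j\<in>I. Lg w - g w (x j)) + R w)) = H 1 x a" for a
        unfolding H_def by (rule arg_cong[where f="MX D"], rule ext, simp add: algebra_simps)
      moreover have "MX D (\<lambda>w. - 2 * g w a + ((\<Sum>j\<in>I. Lg w - g w (x j)) + R w)) = H (-1) x a" for a
        unfolding H_def by (rule arg_cong[where f="MX D"], rule ext, simp add: algebra_simps)
      ultimately show ?thesis by simp
    qed
    finally show "(\<integral>a. MX D (\<lambda>w. Lg w - g w a + ((\<Sum>j\<in>I. Lg w - g w (x j)) + R w)) \<partial>M) \<le> (\<integral>a. (H 1 x a + H (-1) x a) / 2 \<partial>M)" .
  qed
  also have "\<dots> = (\<integral>a. \<integral>x. (H 1 x a + H (-1) x a) / 2 \<partial>?P \<partial>M)"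
    by (rule PPM.Fubini_integral[symmetric, where f="\<lambda>x a. (H 1 x a + H (-1) x a) / 2", unfolded case_prod_unfold]) (rule intH)
  also have "\<dots> \<le> (\<integral>a. \<integral>x. (G 1 x a + G (-1) x a) / 2 \<partial>?P \<partial>M)"
  proof (rule integral_mono)
    show "integrable M (\<lambda>a. \<integral>x. (H 1 x a + H (-1) x a) / 2 \<partial>?P)"
      by (rule PPM.integrable_snd[where f="\<lambda>x a. (H 1 x a + H (-1) x a) / 2", unfolded case_prod_unfold]) (rule intH)
    show "integrable M (\<lambda>a. \<integral>x. (G 1 x a + G (-1) x a) / 2 \<partial>?P)"
      by (rule PPM.integrable_snd[where f="\<lambda>x a. (G 1 x a + G (-1) x a) / 2", unfolded case_prod_unfold]) (rule intG)
    fix a assume a: "a \<in> space M"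
    have iH: "integrable ?P (\<lambda>x. H s x a)" for s
      unfolding H_def by (intro MX_integrable[OF D] intS PP.integrable_const int_comp insert.hyps; assumption)
    have iG: "integrable ?P (\<lambda>x. G s x a)" for s
      unfolding G_def by (intro avg_integrable insert.hyps MX_integrable[OF D] intS PP.integrable_const int_comp; assumption)
    have le: "(\<integral>x. H s x a \<partial>?P) \<le> (\<integral>x. G s x a \<partial>?P)" for s
      unfolding H_def G_def by (rule insert.IH)
    show "(\<integral>x. (H 1 x a + H (-1) x a) / 2 \<partial>?P) \<le> (\<integral>x. (G 1 x a + G (-1) x a) / 2 \<partial>?P)"
      using le[of 1] le[of "-1"] iH[of 1] iH[of "-1"] iG[of 1] iG[of "-1"] by simp
  qed
  also have "\<dots> = (\<integral>x. \<integral>a. (G 1 x a + G (-1) x a) / 2 \<partial>M \<partial>?P)"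
    by (rule PPM.Fubini_integral[where f="\<lambda>x a. (G 1 x a + G (-1) x a) / 2", unfolded case_prod_unfold]) (rule intG)
  also have "\<dots> = (\<integral>x. \<integral>a. avg (insert i I) (\<lambda>\<sigma>. MX D (\<lambda>w. (\<Sum>j\<in>insert i I. 2 * \<sigma> j * g w ((x(i:=a)) j)) + R w)) \<partial>M \<partial>?P)"
  proof -
    have "(G 1 x a + G (-1) x a) / 2 = avg (insert i I) (\<lambda>\<sigma>. MX D (\<lambda>w. (\<Sum>j\<in>insert i I. 2 * \<sigma> j * g w ((x(i:=a)) j)) + R w))" for x a
    proof -
      have e: "(\<Sum>j\<in>insert i I. 2 * (\<sigma>(i:=s)) j * g w ((x(i:=a)) j)) + R w = (\<Sum>j\<in>I. 2 * \<sigma> j * g w (x j)) + (2 * s * g w a + R w)"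
        for \<sigma> s w
      proof -
        have "(\<Sum>j\<in>insert i I. 2 * (\<sigma>(i:=s)) j * g w ((x(i:=a)) j)) = 2 * (\<sigma>(i:=s)) i * g w a + (\<Sum>j\<in>I. 2 * (\<sigma>(i:=s)) j * g w (x j))"
          by (rule sum_upd_insert[OF insert.hyps(2,1), where h="\<lambda>j v. 2 * (\<sigma>(i:=s)) j * g w v"])
        also have "(\<Sum>j\<in>I. 2 * (\<sigma>(i:=s)) j * g w (x j)) = (\<Sum>j\<in>I. 2 * \<sigma> j * g w (x j))"
          by (rule sum.cong) (use insert.hyps in auto)
        finally show ?thesis by simp
      qed
      show ?thesis unfolding avg_insert[OF insert.hyps(1,2)] G_def by (simp only: e)
    qed
    then show ?thesis by simp
  qed
  also have "\<dots> = (\<integral>x. avg (insert i I) (\<lambda>\<sigma>. MX D (\<lambda>w. (\<Sum>j\<in>insert i I. 2 * \<sigma> j * g w (x j)) + R w)) \<partial>?P')"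
    by (rule P.product_integral_insert[OF insert.hyps(1,2) intR, symmetric])
  finally show ?case .
qed

end


lemma avg_add: "avg I (\<lambda>\<sigma>. F \<sigma> + G \<sigma>) = avg I F + avg I G"
  unfolding avg_def by (simp add: sum.distrib add_divide_distrib)

context
  fixes D :: "'w set" and \<phi> :: "real \<Rightarrow> real"
  assumes D: "finite D" "D \<noteq> {}"
    and lip: "\<And>u v. \<bar>\<phi> u - \<phi> v\<bar> \<le> \<bar>u - v\<bar>"
begin

lemma contraction_step:
  "MX D (\<lambda>w. \<phi> (t w) + Q w) + MX D (\<lambda>w. - \<phi> (t w) + Q w)
    \<le> MX D (\<lambda>w. t w + Q w) + MX D (\<lambda>w. - t w + Q w)"
proof -
  obtain w1 where w1: "w1 \<in> D" "MX D (\<lambda>w. \<phi> (t w) + Q w) = \<phi> (t w1) + Q w1"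
    using MX_attained[OF D] by blast
  obtain w2 where w2: "w2 \<in> D" "MX D (\<lambda>w. - \<phi> (t w) + Q w) = - \<phi> (t w2) + Q w2"
    using MX_attained[OF D] by blast
  have a: "\<phi> (t w1) - \<phi> (t w2) \<le> \<bar>t w1 - t w2\<bar>" using lip[of "t w1" "t w2"] by linarith
  have b1: "t w1 + Q w1 \<le> MX D (\<lambda>w. t w + Q w)" "- t w1 + Q w1 \<le> MX D (\<lambda>w. - t w + Q w)"
    using MX_ge[OF D w1(1)] by auto
  have b2: "t w2 + Q w2 \<le> MX D (\<lambda>w. t w + Q w)" "- t w2 + Q w2 \<le> MX D (\<lambda>w. - t w + Q w)"
    using MX_ge[OF D w2(1)] by auto
  show ?thesis
  proof (cases "t w1 \<ge> t w2")
    case True then show ?thesis using a b1 b2 w1 w2 by linarith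
  next
    case False then show ?thesis using a b1 b2 w1 w2 by linarith
  qed
qed

lemma contraction:
  assumes I: "finite I"
  shows "avg I (\<lambda>\<sigma>. MX D (\<lambda>w. (\<Sum>j\<in>I. \<sigma> j * \<phi> (t j w)) + R w))
      \<le> avg I (\<lambda>\<sigma>. MX D (\<lambda>w. (\<Sum>j\<in>I. \<sigma> j * t j w) + R w))"
  using I
proof (induction I arbitrary: R rule: finite_induct)
  case empty
  then show ?case by (simp add: avg_empty)
next
  case (insert i I)
  have e: "(\<Sum>j\<in>insert i I. (\<sigma>(i:=s)) j * h j w) + R w = (\<Sum>j\<in>I. \<sigma> j * h j w) + (s * h i w + R w)"
    for \<sigma> s h w
  proof -
    have "(\<Sum>j\<in>I. (\<sigma>(i:=s)) j * h j w) = (\<Sum>j\<in>I. \<sigma> j * h j w)"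
      by (rule sum.cong) (use insert.hyps in auto)
    then show ?thesis using insert.hyps by simp
  qed
  have L: "avg (insert i I) (\<lambda>\<sigma>. MX D (\<lambda>w. (\<Sum>j\<in>insert i I. \<sigma> j * \<phi> (t j w)) + R w))
     = (avg I (\<lambda>\<sigma>. MX D (\<lambda>w. (\<Sum>j\<in>I. \<sigma> j * \<phi> (t j w)) + (1 * \<phi> (t i w) + R w)))
      + avg I (\<lambda>\<sigma>. MX D (\<lambda>w. (\<Sum>j\<in>I. \<sigma> j * \<phi> (t j w)) + (-1 * \<phi> (t i w) + R w)))) / 2"
    unfolding avg_insert[OF insert.hyps(1,2)]
    by (simp only: e[where h="\<lambda>j w. \<phi> (t j w)"])
  have Rr: "avg (insert i I) (\<lambda>\<sigma>. MX D (\<lambda>w. (\<Sum>j\<in>insert i I. \<sigma> j * t j w) + R w))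
     = (avg I (\<lambda>\<sigma>. MX D (\<lambda>w. (\<Sum>j\<in>I. \<sigma> j * t j w) + (1 * t i w + R w)))
      + avg I (\<lambda>\<sigma>. MX D (\<lambda>w. (\<Sum>j\<in>I. \<sigma> j * t j w) + (-1 * t i w + R w)))) / 2"
    unfolding avg_insert[OF insert.hyps(1,2)]
    by (simp only: e[where h="t"])
  have step: "avg I (\<lambda>\<sigma>. MX D (\<lambda>w. (\<Sum>j\<in>I. \<sigma> j * \<phi> (t j w)) + (1 * \<phi> (t i w) + R w)))
      + avg I (\<lambda>\<sigma>. MX D (\<lambda>w. (\<Sum>j\<in>I. \<sigma> j * \<phi> (t j w)) + (-1 * \<phi> (t i w) + R w)))
    \<le> avg I (\<lambda>\<sigma>. MX D (\<lambda>w. (\<Sum>j\<in>I. \<sigma> j * \<phi> (t j w)) + (1 * t i w + R w)))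
      + avg I (\<lambda>\<sigma>. MX D (\<lambda>w. (\<Sum>j\<in>I. \<sigma> j * \<phi> (t j w)) + (-1 * t i w + R w)))"
  proof -
    have "MX D (\<lambda>w. (\<Sum>j\<in>I. \<sigma> j * \<phi> (t j w)) + (1 * \<phi> (t i w) + R w))
        + MX D (\<lambda>w. (\<Sum>j\<in>I. \<sigma> j * \<phi> (t j w)) + (-1 * \<phi> (t i w) + R w))
      \<le> MX D (\<lambda>w. (\<Sum>j\<in>I. \<sigma> j * \<phi> (t j w)) + (1 * t i w + R w))
        + MX D (\<lambda>w. (\<Sum>j\<in>I. \<sigma> j * \<phi> (t j w)) + (-1 * t i w + R w))" for \<sigma>
    proof -
      let ?Q = "\<lambda>w. (\<Sum>j\<in>I. \<sigma> j * \<phi> (t j w)) + R w"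
      have e1: "MX D (\<lambda>w. \<phi> (t i w) + ?Q w) = MX D (\<lambda>w. (\<Sum>j\<in>I. \<sigma> j * \<phi> (t j w)) + (1 * \<phi> (t i w) + R w))"
        by (rule arg_cong[where f="MX D"], rule ext, simp add: algebra_simps)
      have e2: "MX D (\<lambda>w. - \<phi> (t i w) + ?Q w) = MX D (\<lambda>w. (\<Sum>j\<in>I. \<sigma> j * \<phi> (t j w)) + (-1 * \<phi> (t i w) + R w))"
        by (rule arg_cong[where f="MX D"], rule ext, simp add: algebra_simps)
      have e3: "MX D (\<lambda>w. t i w + ?Q w) = MX D (\<lambda>w. (\<Sum>j\<in>I. \<sigma> j * \<phi> (t j w)) + (1 * t i w + R w))"
        by (rule arg_cong[where f="MX D"], rule ext, simp add: algebra_simps)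
      have e4: "MX D (\<lambda>w. - t i w + ?Q w) = MX D (\<lambda>w. (\<Sum>j\<in>I. \<sigma> j * \<phi> (t j w)) + (-1 * t i w + R w))"
        by (rule arg_cong[where f="MX D"], rule ext, simp add: algebra_simps)
      show ?thesis using contraction_step[of "t i" ?Q] unfolding e1 e2 e3 e4 .
    qed
    then have "avg I (\<lambda>\<sigma>. MX D (\<lambda>w. (\<Sum>j\<in>I. \<sigma> j * \<phi> (t j w)) + (1 * \<phi> (t i w) + R w))
        + MX D (\<lambda>w. (\<Sum>j\<in>I. \<sigma> j * \<phi> (t j w)) + (-1 * \<phi> (t i w) + R w)))
      \<le> avg I (\<lambda>\<sigma>. MX D (\<lambda>w. (\<Sum>j\<in>I. \<sigma> j * \<phi> (t j w)) + (1 * t i w + R w))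
        + MX D (\<lambda>w. (\<Sum>j\<in>I. \<sigma> j * \<phi> (t j w)) + (-1 * t i w + R w)))"
      by (intro avg_mono insert.hyps)
    then show ?thesis by (simp only: avg_add)
  qed
  have ih1: "avg I (\<lambda>\<sigma>. MX D (\<lambda>w. (\<Sum>j\<in>I. \<sigma> j * \<phi> (t j w)) + (1 * t i w + R w)))
      \<le> avg I (\<lambda>\<sigma>. MX D (\<lambda>w. (\<Sum>j\<in>I. \<sigma> j * t j w) + (1 * t i w + R w)))"
    by (rule insert.IH)
  have ih2: "avg I (\<lambda>\<sigma>. MX D (\<lambda>w. (\<Sum>j\<in>I. \<sigma> j * \<phi> (t j w)) + (-1 * t i w + R w)))
      \<le> avg I (\<lambda>\<sigma>. MX D (\<lambda>w. (\<Sum>j\<in>I. \<sigma> j * t j w) + (-1 * t i w + R w)))"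
    by (rule insert.IH)
  have "avg I (\<lambda>\<sigma>. MX D (\<lambda>w. (\<Sum>j\<in>I. \<sigma> j * \<phi> (t j w)) + (1 * \<phi> (t i w) + R w)))
      + avg I (\<lambda>\<sigma>. MX D (\<lambda>w. (\<Sum>j\<in>I. \<sigma> j * \<phi> (t j w)) + (-1 * \<phi> (t i w) + R w)))
    \<le> avg I (\<lambda>\<sigma>. MX D (\<lambda>w. (\<Sum>j\<in>I. \<sigma> j * t j w) + (1 * t i w + R w)))
      + avg I (\<lambda>\<sigma>. MX D (\<lambda>w. (\<Sum>j\<in>I. \<sigma> j * t j w) + (-1 * t i w + R w)))"
    by (rule order.trans[OF step add_mono[OF ih1 ih2]])
  then show ?case unfolding L Rr by (rule divide_right_mono) simp
qed

end


lemma rad_prob: "prob_space rademacher"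
  unfolding rademacher_def by (rule prob_space_measure_pmf)

lemma rad_integral:
  fixes f :: "real \<Rightarrow> real"
  shows "(\<integral>y. f y \<partial>rademacher) = (f 1 + f (-1)) / 2"
proof -
  have "(\<integral>y. f y \<partial>measure_pmf (pmf_of_set {-1, 1::real})) = (\<Sum>a\<in>{-1, 1}. pmf (pmf_of_set {-1, 1::real}) a *\<^sub>R f a)"
    by (rule integral_measure_pmf) auto
  then show ?thesis unfolding rademacher_def by (simp add: field_simps)
qed

lemma rad_PiM_integral:
  fixes f :: "(nat \<Rightarrow> real) \<Rightarrow> real"
  assumes I: "finite I" and f: "f \<in> borel_measurable (PiM I (\<lambda>_. rademacher))"
    and b: "\<And>\<sigma>. \<sigma> \<in> space (PiM I (\<lambda>_. rademacher)) \<Longrightarrow> \<bar>f \<sigma>\<bar> \<le> C"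
  shows "(\<integral>\<sigma>. f \<sigma> \<partial>PiM I (\<lambda>_. rademacher)) = avg I f"
  using I f b
proof (induction I arbitrary: f rule: finite_induct)
  case empty
  then show ?case by (simp add: PiM_empty lebesgue_integral_count_space_finite avg_empty)
next
  case (insert i I)
  interpret R: prob_space rademacher by (rule rad_prob)
  interpret P: product_prob_space "\<lambda>_::nat. rademacher" by unfold_locales
  interpret PP': prob_space "PiM (insert i I) (\<lambda>_. rademacher)" by (rule prob_space_PiM) (simp add: rad_prob)
  note fm = insert.prems(1)
  have int: "integrable (PiM (insert i I) (\<lambda>_. rademacher)) f"
    using insert.prems by (intro PP'.integrable_const_bound[where B=C]) auto
  have upd: "x(i:=y) \<in> space (PiM (insert i I) (\<lambda>_. rademacher))" if "x \<in> space (PiM I (\<lambda>_. rademacher))" for x y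
    using that by (auto simp: space_PiM PiE_def extensional_def Pi_iff rademacher_def)
  have mupd: "(\<lambda>x. f (x(i:=y))) \<in> borel_measurable (PiM I (\<lambda>_. rademacher))" for y
  proof -
    have "(\<lambda>x. (x, y)) \<in> measurable (PiM I (\<lambda>_. rademacher)) (PiM I (\<lambda>_. rademacher) \<Otimes>\<^sub>M rademacher)"
      by (rule measurable_Pair) (auto simp: rademacher_def)
    from measurable_comp[OF measurable_comp[OF this measurable_add_dim[where I=I and M="\<lambda>_. rademacher" and i=i]] fm]
    show ?thesis by (simp add: comp_def)
  qed
  have "(\<integral>\<sigma>. f \<sigma> \<partial>PiM (insert i I) (\<lambda>_. rademacher))
      = (\<integral>x. \<integral>y. f (x(i:=y)) \<partial>rademacher \<partial>PiM I (\<lambda>_. rademacher))"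
    by (rule P.product_integral_insert[OF insert.hyps(1,2) int])
  also have "\<dots> = (\<integral>x. (f (x(i:=1)) + f (x(i:=-1))) / 2 \<partial>PiM I (\<lambda>_. rademacher))"
    by (simp add: rad_integral)
  also have "\<dots> = ((\<integral>x. f (x(i:=1)) \<partial>PiM I (\<lambda>_. rademacher)) + (\<integral>x. f (x(i:=-1)) \<partial>PiM I (\<lambda>_. rademacher))) / 2"
  proof -
    interpret PP: prob_space "PiM I (\<lambda>_. rademacher)" by (rule prob_space_PiM) (simp add: rad_prob)
    have "integrable (PiM I (\<lambda>_. rademacher)) (\<lambda>x. f (x(i:=y)))" for y
    proof -
      have "\<And>x. x \<in> space (PiM I (\<lambda>_. rademacher)) \<Longrightarrow> \<bar>f (x(i:=y))\<bar> \<le> C"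
        by (rule insert.prems(2)[OF upd])
      then show ?thesis using mupd by (intro PP.integrable_const_bound[where B=C] AE_I2) auto
    qed
    then show ?thesis by simp
  qed
  also have "\<dots> = (avg I (\<lambda>\<sigma>. f (\<sigma>(i:=1))) + avg I (\<lambda>\<sigma>. f (\<sigma>(i:=-1)))) / 2"
  proof -
    have "(\<integral>x. f (x(i:=y)) \<partial>PiM I (\<lambda>_. rademacher)) = avg I (\<lambda>\<sigma>. f (\<sigma>(i:=y)))" for y
      by (rule insert.IH[OF mupd insert.prems(2)[OF upd]])
    then show ?thesis by (simp only:)
  qed
  also have "\<dots> = avg (insert i I) f"
    by (rule avg_insert[OF insert.hyps(1,2), symmetric])
  finally show ?case .
qed


lemma outer_row: "outer u v $ i = (u $ i) *\<^sub>R v"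
  unfolding outer_def by (simp add: vec_eq_iff)

lemma norm_outer: "norm (outer u v) = norm u * norm v"
proof -
  have r: "norm (outer u v $ i) = norm v * \<bar>u $ i\<bar>" for i
    by (simp add: outer_row mult.commute)
  have "norm (outer u v) = L2_set (\<lambda>i. norm v * \<bar>u $ i\<bar>) UNIV"
    by (subst norm_vec_def) (simp only: r)
  also have "\<dots> = norm v * L2_set (\<lambda>i. \<bar>u $ i\<bar>) UNIV"
    by (rule L2_set_right_distrib[symmetric]) simp
  also have "L2_set (\<lambda>i. \<bar>u $ i\<bar>) UNIV = norm u" unfolding norm_vec_def by simp
  finally show ?thesis by simp
qed

definition pos_part' where "pos_part' = pos_part"

lemma pos_part_lip: "\<bar>pos_part a - pos_part b\<bar> \<le> \<bar>a - b\<bar>"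
  unfolding pos_part_def by linarith

lemma pos_part_nonneg: "0 \<le> pos_part a" unfolding pos_part_def by simp

locale setting =
  fixes X :: "(real^'d) set"
    and \<rho> :: "((real^'d) \<times> real) measure"
    and m :: nat and r lam :: real
    and N :: "real^'d^'d \<Rightarrow> real"
    and Az :: "(nat \<Rightarrow> (real^'d) \<times> real) \<Rightarrow> real^'d^'d"
    and fz :: "(nat \<Rightarrow> (real^'d) \<times> real) \<Rightarrow> (real^'d \<Rightarrow> real)"
  assumes m_pos: "m \<ge> 1"
    and X_open: "open X" and X_bdd: "bounded X" and X_ne: "X \<noteq> {}"
    and rho_prob: "prob_space \<rho>" and rho_sets: "sets \<rho> = sets borel"
    and rho_supp: "AE zz in \<rho>. zz \<in> X \<times> {-1, 1}"
    and r_pos: "r > 0" and lam_pos: "lam > 0"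
    and N_norm: "is_matrix_norm N"
    and Az_min: "\<And>z. transpose (Az z) = Az z \<and>
        (\<forall>A. transpose A = A \<longrightarrow>
           emp_err_A m r z (Az z) + lam * N (Az z) \<le> emp_err_A m r z A + lam * N A)"
    and fz_min: "\<And>z. fz z \<in> hyp_space m r z (Az z) \<and>
        (\<forall>f \<in> hyp_space m r z (Az z). emp_hinge m z (fz z) \<le> emp_hinge m z f)"
begin

definition R0 where "R0 = (SOME R. R > 0 \<and> (\<forall>x\<in>X. norm x \<le> R))"

lemma R0: "R0 > 0" "x \<in> X \<Longrightarrow> norm x \<le> R0"
proof -
  have "\<exists>R. R > 0 \<and> (\<forall>x\<in>X. norm x \<le> R)" using X_bdd bounded_pos by blast
  from someI_ex[OF this] show "R0 > 0" "x \<in> X \<Longrightarrow> norm x \<le> R0" unfolding R0_def by auto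
qed

definition S0 where "S0 = X \<times> {-1, 1::real}"
definition x0 where "x0 = (SOME x. x \<in> X)"
lemma x0: "x0 \<in> X" unfolding x0_def using X_ne by (simp add: some_in_eq)

definition pz where "pz a = (if a \<in> S0 then a else (x0, 1))"
lemma pz_S0: "pz a \<in> S0" unfolding pz_def S0_def using x0 by auto
lemma pz_X: "fst (pz a) \<in> X" using pz_S0[of a] unfolding S0_def by auto
lemma pz_y: "\<bar>snd (pz a)\<bar> = 1" using pz_S0[of a] unfolding S0_def by auto

definition ell where "ell w a = pos_part (1 - snd (pz a) * (w \<bullet> fst (pz a)))"

definition hh where "hh v = Sup ((\<lambda>xt. dual_norm N (outer v xt)) ` X)"
definition B where "B = Xstar N X / (lam * r)"
definition W where "W = {w. (\<forall>x\<in>X. \<bar>w \<bullet> x\<bar> \<le> B) \<and> (\<forall>v. w \<bullet> v \<le> hh v / (lam * r))}"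

lemma cN: "cN N > 0" "cN N * norm A \<le> N A" using cN[OF N_norm] by auto

lemma dual_outer_le: "dual_norm N (outer u v) \<le> norm u * norm v / cN N"
  using dual_le[OF N_norm, of "outer u v"] by (simp add: norm_outer)

lemma hh_bdd: "bdd_above ((\<lambda>xt. dual_norm N (outer v xt)) ` X)"
proof (rule bdd_aboveI)
  fix t assume "t \<in> (\<lambda>xt. dual_norm N (outer v xt)) ` X"
  then obtain xt where xt: "xt \<in> X" "t = dual_norm N (outer v xt)" by auto
  have "t \<le> norm v * norm xt / cN N" using xt dual_outer_le by simp
  also have "\<dots> \<le> norm v * R0 / cN N"
    using R0(2)[OF xt(1)] cN(1) by (intro divide_right_mono mult_left_mono) auto
  finally show "t \<le> norm v * R0 / cN N" .
qed

lemma hh_ge: "xt \<in> X \<Longrightarrow> dual_norm N (outer v xt) \<le> hh v"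
  unfolding hh_def by (rule cSup_upper[OF _ hh_bdd]) auto

lemma hh_nonneg: "0 \<le> hh v"
  using hh_ge[OF x0, of v] dual_nonneg[OF N_norm, of "outer v x0"] by linarith

lemma hh_lip: "\<bar>hh v - hh v'\<bar> \<le> norm (v - v') * R0 / cN N"
proof -
  have a: "hh v \<le> hh v' + norm (v - v') * R0 / cN N" for v v'
    unfolding hh_def[of v]
  proof (rule cSup_least)
    show "(\<lambda>xt. dual_norm N (outer v xt)) ` X \<noteq> {}" using X_ne by auto
    fix t assume "t \<in> (\<lambda>xt. dual_norm N (outer v xt)) ` X"
    then obtain xt where xt: "xt \<in> X" "t = dual_norm N (outer v xt)" by auto
    have "dual_norm N (outer v xt) - dual_norm N (outer v' xt) \<le> norm (outer v xt - outer v' xt) / cN N"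
      using dual_lipschitz[OF N_norm, of "outer v xt" "outer v' xt"] by linarith
    also have "\<dots> = norm (v - v') * norm xt / cN N" by (simp add: outer_diff norm_outer)
    also have "\<dots> \<le> norm (v - v') * R0 / cN N"
      using R0(2)[OF xt(1)] cN(1) by (intro divide_right_mono mult_left_mono) auto
    finally show "t \<le> hh v' + norm (v - v') * R0 / cN N" using hh_ge[OF xt(1), of v'] xt by linarith
  qed
  show ?thesis using a[of v v'] a[of v' v] by (simp add: norm_minus_commute abs_le_iff)
qed

lemma hh_cont: "continuous_on UNIV hh"
proof (rule continuous_on_iff[THEN iffD2], intro ballI allI impI)
  fix v :: "real^'d" and e :: real assume e: "e > 0"
  define d where "d = e * cN N / R0"
  have d: "d > 0" unfolding d_def using e cN(1) R0(1) by simp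
  show "\<exists>d>0. \<forall>v'\<in>UNIV. dist v' v < d \<longrightarrow> dist (hh v') (hh v) < e"
  proof (intro exI[of _ d] conjI ballI impI d)
    fix v' assume "dist v' v < d"
    then have "norm (v' - v) * R0 / cN N < d * R0 / cN N"
      using R0(1) cN(1) by (intro divide_strict_right_mono mult_strict_right_mono) (auto simp: dist_norm)
    also have "\<dots> = e" unfolding d_def using R0(1) cN(1) by simp
    finally show "dist (hh v') (hh v) < e" using hh_lip[of v' v] by (simp add: dist_real_def)
  qed
qed

lemma Xstar_bdd: "bdd_above {dual_norm N (outer x' x) | x x'. x \<in> X \<and> x' \<in> X}"
proof (rule bdd_aboveI)
  fix t assume "t \<in> {dual_norm N (outer x' x) | x x'. x \<in> X \<and> x' \<in> X}"
  then obtain x x' where xx: "x \<in> X" "x' \<in> X" "t = dual_norm N (outer x' x)" by auto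
  have "t \<le> norm x' * norm x / cN N" using xx dual_outer_le by simp
  also have "\<dots> \<le> R0 * R0 / cN N"
    using R0(2)[OF xx(1)] R0(2)[OF xx(2)] cN(1) R0(1) by (intro divide_right_mono mult_mono) auto
  finally show "t \<le> R0 * R0 / cN N" .
qed

lemma Xstar_ge: "x \<in> X \<Longrightarrow> x' \<in> X \<Longrightarrow> dual_norm N (outer x' x) \<le> Xstar N X"
  unfolding Xstar_def by (rule cSup_upper[OF _ Xstar_bdd]) auto

lemma Xstar_nonneg: "0 \<le> Xstar N X"
  using Xstar_ge[OF x0 x0] dual_nonneg[OF N_norm] by (meson order.trans)

lemma B_nonneg: "0 \<le> B" unfolding B_def using Xstar_nonneg r_pos lam_pos by simp

lemma W_bound: "w \<in> W \<Longrightarrow> x \<in> X \<Longrightarrow> \<bar>w \<bullet> x\<bar> \<le> B" unfolding W_def by auto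
lemma W_hh: "w \<in> W \<Longrightarrow> w \<bullet> v \<le> hh v / (lam * r)" unfolding W_def by auto

lemma ell_bounds: "w \<in> W \<Longrightarrow> 0 \<le> ell w a \<and> ell w a \<le> 1 + B"
proof -
  assume w: "w \<in> W"
  have "\<bar>snd (pz a) * (w \<bullet> fst (pz a))\<bar> \<le> B"
    using W_bound[OF w pz_X] pz_y by (simp add: abs_mult)
  then show ?thesis unfolding ell_def pos_part_def by auto
qed

lemma ell_diff: "w \<in> W \<Longrightarrow> \<bar>ell w a - ell w b\<bar> \<le> 2 * B"
proof -
  assume w: "w \<in> W"
  have "\<bar>snd (pz c) * (w \<bullet> fst (pz c))\<bar> \<le> B" for c
    using W_bound[OF w pz_X] pz_y by (simp add: abs_mult)
  from this[of a] this[of b] show ?thesis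
    unfolding ell_def using pos_part_lip[of "1 - snd (pz a) * (w \<bullet> fst (pz a))" "1 - snd (pz b) * (w \<bullet> fst (pz b))"]
    by linarith
qed

lemma ell_lip: "\<bar>ell w a - ell w' a\<bar> \<le> R0 * norm (w - w')"
proof -
  have "\<bar>ell w a - ell w' a\<bar> \<le> \<bar>snd (pz a) * (w \<bullet> fst (pz a)) - snd (pz a) * (w' \<bullet> fst (pz a))\<bar>"
  proof -
    have "\<bar>ell w a - ell w' a\<bar> \<le> \<bar>(1 - snd (pz a) * (w \<bullet> fst (pz a))) - (1 - snd (pz a) * (w' \<bullet> fst (pz a)))\<bar>"
      unfolding ell_def by (rule pos_part_lip)
    then show ?thesis by (simp add: abs_minus_commute)
  qed
  also have "\<dots> = \<bar>(w - w') \<bullet> fst (pz a)\<bar>" using pz_y[of a]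
    by (simp add: abs_mult inner_diff_left right_diff_distrib[symmetric])
  also have "\<dots> \<le> norm (w - w') * norm (fst (pz a))" by (rule Cauchy_Schwarz_ineq2)
  also have "\<dots> \<le> norm (w - w') * R0" using R0(2)[OF pz_X] by (simp add: mult_left_mono)
  finally show ?thesis by (simp add: mult.commute)
qed

end


context setting
begin

definition supp where "supp z \<longleftrightarrow> (\<forall>i<m. z i \<in> S0)"

lemma KA_zero: "KA 0 x y = 0" unfolding KA_def by simp

lemma emp_err_nonneg: "0 \<le> emp_err_A m r z A"
  unfolding emp_err_A_def by (intro mult_nonneg_nonneg sum_nonneg) (auto simp: pos_part_nonneg)

lemma emp_err_zero: "emp_err_A m r z 0 = 1"
  unfolding emp_err_A_def using m_pos by (simp add: KA_zero pos_part_def)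

lemma N_Az: "N (Az z) \<le> 1 / lam"
proof -
  have "emp_err_A m r z (Az z) + lam * N (Az z) \<le> emp_err_A m r z 0 + lam * N 0"
    using Az_min[of z] by (simp add: transpose_def vec_eq_iff)
  then have "lam * N (Az z) \<le> 1" using emp_err_nonneg[of z "Az z"] N_0[OF N_norm]
    by (simp add: emp_err_zero)
  then show ?thesis using lam_pos by (simp add: field_simps)
qed

lemma Az_sym: "transpose (Az z) = Az z" using Az_min[of z] by blast

lemma KA_dual: "\<bar>KA (Az z) u v\<bar> \<le> dual_norm N (outer u v) / lam"
proof -
  have "\<bar>KA (Az z) u v\<bar> \<le> N (Az z) * dual_norm N (outer u v)"
    using abs_inner_le_dual[OF N_norm, of "outer u v" "Az z"] by (simp add: inner_outer)
  also have "\<dots> \<le> (1 / lam) * dual_norm N (outer u v)"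
    by (rule mult_right_mono[OF N_Az dual_nonneg[OF N_norm]])
  finally show ?thesis by simp
qed

lemma weighted_sum_bound:
  assumes "(\<Sum>j<m. \<bar>\<alpha> j\<bar>) \<le> 1 / r" "\<And>j. j < m \<Longrightarrow> \<bar>c j\<bar> \<le> C" "0 \<le> C"
  shows "\<bar>\<Sum>j<m. \<alpha> j * c j\<bar> \<le> C / r"
proof -
  have "\<bar>\<Sum>j<m. \<alpha> j * c j\<bar> \<le> (\<Sum>j<m. \<bar>\<alpha> j\<bar> * C)"
    by (rule order.trans[OF sum_abs sum_mono]) (use assms(2) in \<open>auto simp: abs_mult intro: mult_left_mono\<close>)
  also have "\<dots> = (\<Sum>j<m. \<bar>\<alpha> j\<bar>) * C" by (simp add: sum_distrib_right)
  also have "\<dots> \<le> (1 / r) * C" by (rule mult_right_mono[OF assms(1,3)])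
  finally show ?thesis by simp
qed

lemma supp_X: "supp z \<Longrightarrow> j < m \<Longrightarrow> fst (z j) \<in> X" unfolding supp_def S0_def by force
lemma supp_y: "supp z \<Longrightarrow> j < m \<Longrightarrow> \<bar>snd (z j)\<bar> = 1" unfolding supp_def S0_def by force

lemma fz_linear:
  assumes z: "supp z"
  shows "\<exists>w\<in>W. fz z = (\<lambda>x. w \<bullet> x)"
proof -
  let ?A = "Az z"
  obtain \<alpha> where al: "(\<Sum>j<m. \<bar>\<alpha> j\<bar>) \<le> 1 / r"
      and f: "fz z = (\<lambda>x. \<Sum>j<m. \<alpha> j * KA ?A (fst (z j)) x)"
    using fz_min[of z] unfolding hyp_space_def by blast
  define w where "w = (\<Sum>j<m. \<alpha> j *\<^sub>R (?A *v fst (z j)))"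
  have wv: "w \<bullet> v = (\<Sum>j<m. \<alpha> j * KA ?A v (fst (z j)))" for v
    unfolding w_def KA_def by (simp add: inner_sum_left inner_sum_right inner_commute)
  have fw: "fz z = (\<lambda>x. w \<bullet> x)"
    unfolding f wv using outer_transpose[OF Az_sym] by presburger
  have "w \<in> W" unfolding W_def
  proof (intro CollectI conjI ballI allI)
    fix x assume x: "x \<in> X"
    have "\<bar>KA ?A x (fst (z j))\<bar> \<le> Xstar N X / lam" if "j < m" for j
      using KA_dual[of z x "fst (z j)"] Xstar_ge[OF supp_X[OF z that] x] lam_pos
      by (meson divide_right_mono less_eq_real_def order.trans)
    then show "\<bar>w \<bullet> x\<bar> \<le> B" unfolding wv B_def
      using weighted_sum_bound[OF al, of "\<lambda>j. KA ?A x (fst (z j))" "Xstar N X / lam"] Xstar_nonneg lam_pos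
      by (simp add: field_simps)
  next
    fix v
    have "\<bar>KA ?A v (fst (z j))\<bar> \<le> hh v / lam" if "j < m" for j
      using KA_dual[of z v "fst (z j)"] hh_ge[OF supp_X[OF z that], of v] lam_pos
      by (meson divide_right_mono less_eq_real_def order.trans)
    then have "\<bar>w \<bullet> v\<bar> \<le> hh v / lam / r" unfolding wv
      using weighted_sum_bound[OF al, of "\<lambda>j. KA ?A v (fst (z j))" "hh v / lam"] hh_nonneg lam_pos
      by simp
    then show "w \<bullet> v \<le> hh v / (lam * r)" by (simp add: field_simps)
  qed
  then show ?thesis using fw by blast
qed

lemma fz_emp:
  assumes z: "supp z"
  shows "emp_hinge m z (fz z) \<le> emp_err_A m r z (Az z)"
proof -
  let ?A = "Az z"
  define f0 where "f0 = (\<lambda>x. \<Sum>j<m. (snd (z j) / (real m * r)) * KA ?A (fst (z j)) x)"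
  have "(\<Sum>j<m. \<bar>snd (z j) / (real m * r)\<bar>) = (\<Sum>j<m. 1 / (real m * r))"
    by (rule sum.cong) (use supp_y[OF z] r_pos in \<open>auto simp: abs_divide\<close>)
  also have "\<dots> = 1 / r" using m_pos r_pos by simp
  finally have al0: "(\<Sum>j<m. \<bar>snd (z j) / (real m * r)\<bar>) \<le> 1 / r" by simp
  have "f0 \<in> hyp_space m r z ?A" unfolding hyp_space_def f0_def
    by (rule CollectI, rule exI[of _ "\<lambda>j. snd (z j) / (real m * r)"]) (use al0 in simp)
  then have "emp_hinge m z (fz z) \<le> emp_hinge m z f0" using fz_min[of z] by blast
  also have "emp_hinge m z f0 = emp_err_A m r z ?A"
  proof -
    have "snd (z i) * f0 (fst (z i)) = 1 / (real m * r) * (\<Sum>j<m. snd (z i) * snd (z j) * KA ?A (fst (z i)) (fst (z j)))" for i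
      unfolding f0_def sum_distrib_left
      by (rule sum.cong) (use outer_transpose[OF Az_sym] in \<open>auto simp: field_simps\<close>)
    then show ?thesis unfolding emp_hinge_def emp_err_A_def by simp
  qed
  finally show ?thesis .
qed

lemma pz_id: "a \<in> S0 \<Longrightarrow> pz a = a" unfolding pz_def by simp

lemma emp_hinge_ell: "supp z \<Longrightarrow> emp_hinge m z (\<lambda>x. w \<bullet> x) = (1 / real m) * (\<Sum>i<m. ell w (z i))"
  unfolding emp_hinge_def ell_def supp_def by (auto intro!: sum.cong arg_cong[where f=pos_part] simp: pz_id)

lemma S0_borel: "S0 \<in> sets (borel :: ((real^'d) \<times> real) measure)"
proof -
  have "X \<times> {-1, 1::real} \<in> sets (borel \<Otimes>\<^sub>M borel)"
    by (rule pair_measureI) (auto intro: borel_open[OF X_open])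
  then show ?thesis unfolding S0_def borel_prod .
qed

lemma S0_sets: "S0 \<in> sets \<rho>" using S0_borel rho_sets by simp

definition GG where "GG w a = pos_part (1 - snd a * (w \<bullet> fst a))"

lemma GG_borel: "GG w \<in> borel_measurable borel"
  unfolding GG_def pos_part_def
  by (intro borel_measurable_continuous_onI continuous_intros)

lemma GG_meas: "GG w \<in> borel_measurable \<rho>"
  using GG_borel measurable_cong_sets[OF rho_sets refl] by blast

lemma ell_GG: "ell w a = (if a \<in> S0 then GG w a else GG w (x0, 1))"
  unfolding ell_def GG_def pz_def by auto

lemma ell_meas: "ell w \<in> borel_measurable \<rho>"
proof -
  have "(\<lambda>a. if a \<in> S0 then GG w a else GG w (x0, 1)) \<in> borel_measurable \<rho>"
    by (rule measurable_If_set[OF GG_meas measurable_const]) (use S0_sets in auto)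
  then show ?thesis unfolding ell_GG[abs_def] .
qed

lemma ell_borel: "ell w \<in> borel_measurable borel"
  using ell_meas measurable_cong_sets[OF rho_sets refl] by blast

lemma gen_err_ell: "gen_err \<rho> (\<lambda>x. w \<bullet> x) = (\<integral>a. ell w a \<partial>\<rho>)"
proof -
  have "gen_err \<rho> (\<lambda>x. w \<bullet> x) = (\<integral>a. GG w a \<partial>\<rho>)" unfolding gen_err_def GG_def ..
  also have "\<dots> = (\<integral>a. ell w a \<partial>\<rho>)"
  proof (rule integral_cong_AE[OF GG_meas ell_meas])
    show "AE x in \<rho>. GG w x = ell w x"
      using rho_supp by (rule AE_mp) (auto intro!: AE_I2 simp: ell_GG S0_def)
  qed
  finally show ?thesis .
qed

end


context setting
begin

lemma zero_W: "0 \<in> W" unfolding W_def using B_nonneg hh_nonneg lam_pos r_pos by auto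

lemma W_closed: "closed W"
proof -
  have "W = (\<Inter>x\<in>X. {w. \<bar>w \<bullet> x\<bar> \<le> B}) \<inter> (\<Inter>v. {w. w \<bullet> v \<le> hh v / (lam * r)})"
    unfolding W_def by auto
  also have "closed \<dots>"
    by (intro closed_Int closed_INT ballI closed_Collect_le continuous_intros)
  finally show ?thesis .
qed

lemma W_bounded: "bounded W"
proof -
  obtain e where e: "e > 0" "ball x0 e \<subseteq> X" using X_open x0 open_contains_ball by blast
  have "norm w \<le> 4 * B / e" if w: "w \<in> W" for w
  proof (cases "w = 0")
    case True then show ?thesis using B_nonneg e by simp
  next
    case False
    define u where "u = (e / 2 / norm w) *\<^sub>R w"
    have "norm u = e / 2" using False e unfolding u_def by simp
    then have "x0 + u \<in> X" using e by (intro subsetD[OF e(2)]) (simp add: dist_norm)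
    then have "\<bar>w \<bullet> (x0 + u)\<bar> \<le> B" by (rule W_bound[OF w])
    moreover have "\<bar>w \<bullet> x0\<bar> \<le> B" by (rule W_bound[OF w x0])
    ultimately have "w \<bullet> u \<le> 2 * B" by (simp add: inner_add_right abs_le_iff)
    moreover have "w \<bullet> u = e / 2 * norm w" unfolding u_def using False
      by (simp add: power2_norm_eq_inner[symmetric] power2_eq_square)
    ultimately have "e / 2 * norm w \<le> 2 * B" by simp
    then show ?thesis using e by (simp add: field_simps)
  qed
  then show ?thesis unfolding bounded_iff by blast
qed

lemma W_compact: "compact W" using W_closed W_bounded by (simp add: compact_eq_bounded_closed)

lemma W_net:
  assumes eta: "\<eta> > 0"
  obtains D where "finite D" "D \<subseteq> W" "D \<noteq> {}" "\<And>w. w \<in> W \<Longrightarrow> \<exists>d\<in>D. norm (w - d) < \<eta>"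
proof -
  have "W \<subseteq> (\<Union>c\<in>W. ball c \<eta>)" using eta by auto
  from compactE_image[OF W_compact _ this] obtain D where D: "D \<subseteq> W" "finite D" "W \<subseteq> (\<Union>c\<in>D. ball c \<eta>)"
    by auto
  have "D \<noteq> {}" using D(3) zero_W by auto
  moreover have "\<exists>d\<in>D. norm (w - d) < \<eta>" if w: "w \<in> W" for w
  proof -
    obtain d where "d \<in> D" "w \<in> ball d \<eta>" using D(3) w by blast
    then show ?thesis by (auto simp: dist_norm norm_minus_commute)
  qed
  ultimately show ?thesis using that D by blast
qed

end


context setting
begin

abbreviation Om where "Om \<equiv> sample_measure m \<rho>"
abbreviation Sg where "Sg \<equiv> PiM {..<m} (\<lambda>_::nat. rademacher)"

definition kap where "kap a = snd (pz a) *\<^sub>R fst (pz a)"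
definition sg :: "real \<Rightarrow> real" where "sg s = (if s = -1 then -1 else 1)"
definition vv where "vv z \<sigma> = (1 / real m) *\<^sub>R (\<Sum>i<m. \<sigma> i *\<^sub>R kap (z i))"
definition vc where "vc p = (1 / real m) *\<^sub>R (\<Sum>i<m. sg (snd p i) *\<^sub>R kap (fst p i))"
definition vraw where "vraw p = (1 / real m) *\<^sub>R (\<Sum>i<m. (snd p i * snd (fst p i)) *\<^sub>R fst (fst p i))"

lemma kap_norm: "norm (kap a) \<le> R0"
  unfolding kap_def using pz_y[of a] R0(2)[OF pz_X[of a]] by simp

lemma kap_alt: "kap a = (if a \<in> S0 then snd a *\<^sub>R fst a else x0)"
  unfolding kap_def pz_def by auto

lemma fst_borel[measurable]: "(\<lambda>a. fst a) \<in> borel_measurable \<rho>"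
  using measurable_cong_sets[OF rho_sets refl] borel_measurable_continuous_onI[OF continuous_on_fst[OF continuous_on_id]]
  by blast

lemma snd_borel[measurable]: "(\<lambda>a. snd a) \<in> borel_measurable \<rho>"
  using measurable_cong_sets[OF rho_sets refl] borel_measurable_continuous_onI[OF continuous_on_snd[OF continuous_on_id]]
  by blast

lemma kap_meas[measurable]: "kap \<in> borel_measurable \<rho>"
proof -
  have "(\<lambda>a. if a \<in> S0 then snd a *\<^sub>R fst a else x0) \<in> borel_measurable \<rho>"
    by (rule measurable_If_set) (use S0_sets in auto)
  then show ?thesis unfolding kap_alt[abs_def] .
qed

lemma hh_meas[measurable]: "hh \<in> borel_measurable borel"
  by (rule borel_measurable_continuous_onI[OF hh_cont])

lemma sg_meas[measurable]: "sg \<in> borel_measurable rademacher"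
  unfolding rademacher_def by simp

lemma ident_rad[measurable]: "(\<lambda>s. s) \<in> borel_measurable rademacher"
  unfolding rademacher_def by simp

lemma hh_le: "hh v \<le> norm v * R0 / cN N"
  unfolding hh_def
proof (rule cSup_least)
  show "(\<lambda>xt. dual_norm N (outer v xt)) ` X \<noteq> {}" using X_ne by auto
  fix t assume "t \<in> (\<lambda>xt. dual_norm N (outer v xt)) ` X"
  then obtain xt where xt: "xt \<in> X" "t = dual_norm N (outer v xt)" by auto
  have "t \<le> norm v * norm xt / cN N" using xt dual_outer_le by simp
  also have "\<dots> \<le> norm v * R0 / cN N"
    using R0(2)[OF xt(1)] cN(1) by (intro divide_right_mono mult_left_mono) auto
  finally show "t \<le> norm v * R0 / cN N" .
qed

lemma sg_abs: "\<bar>sg s\<bar> = 1" unfolding sg_def by auto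

lemma vc_norm: "norm (vc p) \<le> R0"
proof -
  have "norm (\<Sum>i<m. sg (snd p i) *\<^sub>R kap (fst p i)) \<le> (\<Sum>i<m. R0)"
    by (rule order.trans[OF norm_sum sum_mono]) (simp add: sg_abs kap_norm)
  then show ?thesis unfolding vc_def using m_pos by (simp add: field_simps)
qed

lemma hh_vc_bound: "\<bar>hh (vc p)\<bar> \<le> R0 * R0 / cN N"
proof -
  have "norm (vc p) * R0 \<le> R0 * R0" by (rule mult_right_mono[OF vc_norm]) (use R0(1) in simp)
  then have "norm (vc p) * R0 / cN N \<le> R0 * R0 / cN N" using cN(1) by (simp add: divide_right_mono)
  then show ?thesis using hh_le[of "vc p"] hh_nonneg[of "vc p"] by simp
qed

lemma rad_integrand:
  "Sup ((\<lambda>xt. dual_norm N ((1 / real m) *\<^sub>R (\<Sum>i<m. (snd p i * snd (fst p i)) *\<^sub>R outer (fst (fst p i)) xt))) ` X)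
   = hh (vraw p)"
proof -
  have e: "(1 / real m) *\<^sub>R (\<Sum>i<m. c i *\<^sub>R outer (u i) xt) = outer ((1 / real m) *\<^sub>R (\<Sum>i<m. c i *\<^sub>R u i)) xt"
    for c u xt by (subst outer_sum) (rule outer_scale)
  show ?thesis unfolding hh_def vraw_def by (simp only: e)
qed

end


context setting
begin

lemma Om_prob: "prob_space Om"
  unfolding sample_measure_def by (rule prob_space_PiM) (simp add: rho_prob)

lemma Sg_prob: "prob_space Sg"
  by (rule prob_space_PiM) (simp add: rad_prob)

lemma ball_lt: "(\<forall>i\<in>{..<m}. P i) \<longleftrightarrow> (\<forall>i<m. P i)" by auto

lemma AE_supp: "AE z in Om. supp z"
proof -
  have "AE z in PiM {..<m} (\<lambda>_. \<rho>). \<forall>i\<in>{..<m}. z i \<in> S0"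
  proof (rule AE_finite_allI, simp)
    fix i assume i: "i \<in> {..<m}"
    have "AE zz in \<rho>. zz \<in> S0" using rho_supp unfolding S0_def .
    then show "AE z in PiM {..<m} (\<lambda>_. \<rho>). z i \<in> S0"
      by (rule AE_PiM_component[rotated 2]) (use rho_prob i in auto)
  qed
  then show ?thesis unfolding ball_lt supp_def sample_measure_def .
qed

lemma AE_rad: "AE s in rademacher. s \<in> {-1, 1}"
  unfolding rademacher_def by (simp add: AE_measure_pmf_iff)

lemma AE_sg: "AE s in Sg. \<forall>i<m. s i \<in> {-1, 1}"
proof -
  have "AE s in Sg. \<forall>i\<in>{..<m}. s i \<in> {-1, 1}"
  proof (rule AE_finite_allI, simp)
    fix i assume i: "i \<in> {..<m}"
    show "AE s in Sg. s i \<in> {-1, 1}"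
      using AE_rad by (rule AE_PiM_component[rotated 2]) (use rad_prob i in auto)
  qed
  then show ?thesis unfolding ball_lt .
qed

lemma vraw_meas: "(\<lambda>p. hh (vraw p)) \<in> borel_measurable (Om \<Otimes>\<^sub>M Sg)"
  unfolding vraw_def sample_measure_def by measurable

lemma vc_meas: "(\<lambda>p. hh (vc p)) \<in> borel_measurable (Om \<Otimes>\<^sub>M Sg)"
  unfolding vc_def sample_measure_def by measurable

end


context setting
begin

lemma vc_vraw: "supp z \<Longrightarrow> (\<forall>i<m. s i \<in> {-1, 1}) \<Longrightarrow> vraw (z, s) = vc (z, s)"
  unfolding vraw_def vc_def
proof (intro arg_cong[where f="\<lambda>v. (1 / real m) *\<^sub>R v"] sum.cong refl)
  fix i assume z: "supp z" and s: "\<forall>i<m. s i \<in> {-1, 1}" and i: "i \<in> {..<m}"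
  have "z i \<in> S0" using z i unfolding supp_def by auto
  moreover have "sg (s i) = s i" using s i unfolding sg_def by auto
  ultimately show "(snd (z, s) i * snd (fst (z, s) i)) *\<^sub>R fst (fst (z, s) i) = sg (snd (z, s) i) *\<^sub>R kap (fst (z, s) i)"
    by (simp add: kap_alt)
qed

lemma vc_vv: "\<sigma> \<in> sgns {..<m} \<Longrightarrow> vc (z, \<sigma>) = vv z \<sigma>"
  unfolding vc_def vv_def sgns_def by (intro arg_cong[where f="\<lambda>v. (1 / real m) *\<^sub>R v"] sum.cong) (auto simp: sg_def)

lemma rad_eq: "rad_complexity m \<rho> N X = (\<integral>z. avg {..<m} (\<lambda>\<sigma>. hh (vv z \<sigma>)) \<partial>Om)"
proof -
  interpret PO: prob_space Om by (rule Om_prob)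
  interpret PS: prob_space Sg by (rule Sg_prob)
  interpret PP: pair_prob_space Om Sg
    by (intro pair_prob_space.intro pair_sigma_finite.intro) (auto intro: Om_prob Sg_prob prob_space_imp_sigma_finite)
  have "rad_complexity m \<rho> N X = (\<integral>p. hh (vraw p) \<partial>(Om \<Otimes>\<^sub>M Sg))"
    unfolding rad_complexity_def rad_integrand ..
  also have "\<dots> = (\<integral>p. hh (vc p) \<partial>(Om \<Otimes>\<^sub>M Sg))"
  proof (rule integral_cong_AE[OF vraw_meas vc_meas])
    have sets: "{p \<in> space (Om \<Otimes>\<^sub>M Sg). supp (fst p) \<and> (\<forall>i<m. snd p i \<in> {-1, 1})} \<in> sets (Om \<Otimes>\<^sub>M Sg)"
      unfolding supp_def sample_measure_def using S0_sets by measurable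
    have "AE p in Om \<Otimes>\<^sub>M Sg. supp (fst p) \<and> (\<forall>i<m. snd p i \<in> {-1, 1})"
      by (rule PP.AE_pair_measure[OF sets]) (use AE_supp AE_sg in \<open>auto elim!: AE_mp intro!: AE_I2\<close>)
    then show "AE p in Om \<Otimes>\<^sub>M Sg. hh (vraw p) = hh (vc p)"
      by (rule AE_mp) (auto intro!: AE_I2 simp: vc_vraw)
  qed
  also have "\<dots> = (\<integral>z. \<integral>s. hh (vc (z, s)) \<partial>Sg \<partial>Om)"
  proof (rule PP.integral_fst'[symmetric])
    show "integrable (Om \<Otimes>\<^sub>M Sg) (\<lambda>p. hh (vc p))"
      using vc_meas hh_vc_bound by (intro PP.P.integrable_const_bound[where B="R0 * R0 / cN N"] AE_I2) auto
  qed
  also have "\<dots> = (\<integral>z. avg {..<m} (\<lambda>\<sigma>. hh (vv z \<sigma>)) \<partial>Om)"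
  proof (rule Bochner_Integration.integral_cong[OF refl])
    fix z assume z: "z \<in> space Om"
    have "(\<integral>s. hh (vc (z, s)) \<partial>Sg) = avg {..<m} (\<lambda>s. hh (vc (z, s)))"
    proof (rule rad_PiM_integral)
      show "(\<lambda>s. hh (vc (z, s))) \<in> borel_measurable Sg"
        using measurable_Pair2[OF vc_meas z] .
      show "\<bar>hh (vc (z, s))\<bar> \<le> R0 * R0 / cN N" for s by (rule hh_vc_bound)
    qed simp
    also have "\<dots> = avg {..<m} (\<lambda>\<sigma>. hh (vv z \<sigma>))"
      unfolding avg_def by (intro arg_cong[where f="\<lambda>x. x / 2 ^ card {..<m}"] sum.cong) (auto simp: vc_vv)
    finally show "(\<integral>s. hh (vc (z, s)) \<partial>Sg) = avg {..<m} (\<lambda>\<sigma>. hh (vv z \<sigma>))" .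
  qed
  finally show ?thesis .
qed

end


lemma avg_cmult: "avg I (\<lambda>\<sigma>. c * F \<sigma>) = c * avg I F"
  unfolding avg_def by (simp add: sum_distrib_left)

context setting
begin

definition Lw where "Lw w = (\<integral>a. ell w a \<partial>\<rho>)"
definition Lz where "Lz w z = (1 / real m) * (\<Sum>i<m. ell w (z i))"
definition FD where "FD D z = MX D (\<lambda>w. Lw w - Lz w z)"

lemma phi_lip: "\<bar>2 * pos_part (1 - u / 2) - 2 * pos_part (1 - v / 2)\<bar> \<le> \<bar>u - v\<bar>"
  unfolding pos_part_def by (auto simp: max_def abs_if)

lemma EF_bound:
  assumes D: "finite D" "D \<subseteq> W" "D \<noteq> {}"
  shows "(\<integral>z. FD D z \<partial>Om) \<le> 2 * rad_complexity m \<rho> N X / (lam * r)"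
proof -
  have eb: "\<bar>ell w a\<bar> \<le> 1 + B" if "w \<in> D" for w a
    using ell_bounds[of w a] D(2) that by auto
  interpret S: symm_setup \<rho> D ell "1 + B"
    by (intro symm_setup.intro rho_prob D(1) D(3) ell_meas eb)
  interpret PP: prob_space "PiM {..<m} (\<lambda>_. \<rho>)" by (rule prob_space_PiM) (simp add: rho_prob)
  have Lg: "S.Lg w = Lw w" for w unfolding S.Lg_def Lw_def ..
  have mpos: "real m > 0" using m_pos by simp
  have F1: "FD D z = (1 / real m) * MX D (\<lambda>w. (\<Sum>j\<in>{..<m}. S.Lg w - ell w (z j)) + 0)" for z
  proof -
    have "Lw w - Lz w z = (1 / real m) * ((\<Sum>j\<in>{..<m}. S.Lg w - ell w (z j)) + 0)" for w
      unfolding Lz_def Lg using mpos by (simp add: sum_subtractf field_simps)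
    then have "FD D z = MX D (\<lambda>w. (1 / real m) * ((\<Sum>j\<in>{..<m}. S.Lg w - ell w (z j)) + 0))"
      unfolding FD_def by simp
    also have "\<dots> = (1 / real m) * MX D (\<lambda>w. (\<Sum>j\<in>{..<m}. S.Lg w - ell w (z j)) + 0)"
      by (rule MX_scale[OF D(1,3)]) simp
    finally show ?thesis .
  qed
  define t where "t z j w = 2 * snd (pz (z j)) * (w \<bullet> fst (pz (z j)))" for z :: "nat \<Rightarrow> (real^'d) \<times> real" and j w
  have contr: "avg {..<m} (\<lambda>\<sigma>. MX D (\<lambda>w. (\<Sum>j\<in>{..<m}. 2 * \<sigma> j * ell w (z j)) + 0))
      \<le> (2 * real m / (lam * r)) * avg {..<m} (\<lambda>\<sigma>. hh (vv z \<sigma>))" for z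
  proof -
    have e: "(\<Sum>j\<in>{..<m}. 2 * \<sigma> j * ell w (z j)) = (\<Sum>j\<in>{..<m}. \<sigma> j * (\<lambda>u. 2 * pos_part (1 - u / 2)) (t z j w))" for \<sigma> w
      by (rule sum.cong) (auto simp: t_def ell_def)
    have "avg {..<m} (\<lambda>\<sigma>. MX D (\<lambda>w. (\<Sum>j\<in>{..<m}. 2 * \<sigma> j * ell w (z j)) + 0))
        = avg {..<m} (\<lambda>\<sigma>. MX D (\<lambda>w. (\<Sum>j\<in>{..<m}. \<sigma> j * (\<lambda>u. 2 * pos_part (1 - u / 2)) (t z j w)) + (\<lambda>_. 0) w))"
      by (simp only: e)
    also have "\<dots> \<le> avg {..<m} (\<lambda>\<sigma>. MX D (\<lambda>w. (\<Sum>j\<in>{..<m}. \<sigma> j * t z j w) + (\<lambda>_. 0) w))"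
      by (rule contraction[OF D(1,3)]) (use phi_lip in auto)
    also have "\<dots> \<le> avg {..<m} (\<lambda>\<sigma>. (2 * real m / (lam * r)) * hh (vv z \<sigma>))"
    proof (rule avg_mono, simp)
      fix \<sigma> :: "nat \<Rightarrow> real"
      show "MX D (\<lambda>w. (\<Sum>j\<in>{..<m}. \<sigma> j * t z j w) + (\<lambda>_. 0) w) \<le> (2 * real m / (lam * r)) * hh (vv z \<sigma>)"
        unfolding MX_le_iff[OF D(1,3)]
      proof
        fix w assume w: "w \<in> D"
        have "(\<Sum>j\<in>{..<m}. \<sigma> j * t z j w) = 2 * real m * (w \<bullet> vv z \<sigma>)"
          unfolding t_def vv_def kap_def using mpos
          by (simp add: inner_sum_right sum_distrib_left mult_ac)
        also have "\<dots> \<le> 2 * real m * (hh (vv z \<sigma>) / (lam * r))"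
          using W_hh[of w "vv z \<sigma>"] w D(2) mpos by (intro mult_left_mono) auto
        finally show "(\<Sum>j\<in>{..<m}. \<sigma> j * t z j w) + (\<lambda>_. 0) w \<le> (2 * real m / (lam * r)) * hh (vv z \<sigma>)"
          by simp
      qed
    qed
    also have "\<dots> = (2 * real m / (lam * r)) * avg {..<m} (\<lambda>\<sigma>. hh (vv z \<sigma>))" by (rule avg_cmult)
    finally show ?thesis .
  qed
  have intL: "integrable (PiM {..<m} (\<lambda>_. \<rho>)) (\<lambda>z. avg {..<m} (\<lambda>\<sigma>. MX D (\<lambda>w. (\<Sum>j\<in>{..<m}. 2 * \<sigma> j * ell w (z j)) + 0)))"
    by (intro avg_integrable MX_integrable[OF D(1,3)] S.intS PP.integrable_const S.int_comp finite_lessThan; assumption)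
  have intR: "integrable (PiM {..<m} (\<lambda>_. \<rho>)) (\<lambda>z. avg {..<m} (\<lambda>\<sigma>. hh (vv z \<sigma>)))"
  proof (intro avg_integrable finite_lessThan)
    fix \<sigma> :: "nat \<Rightarrow> real"
    have "hh (vv z \<sigma>) \<le> (\<Sum>i<m. \<bar>\<sigma> i\<bar> * R0) * R0 / cN N" for z
    proof -
      have "norm (vv z \<sigma>) \<le> (\<Sum>i<m. \<bar>\<sigma> i\<bar> * R0)"
      proof -
        have "norm (\<Sum>i<m. \<sigma> i *\<^sub>R kap (z i)) \<le> (\<Sum>i<m. \<bar>\<sigma> i\<bar> * R0)"
          by (rule order.trans[OF norm_sum sum_mono]) (simp add: kap_norm mult_left_mono)
        moreover have "norm (vv z \<sigma>) \<le> norm (\<Sum>i<m. \<sigma> i *\<^sub>R kap (z i))"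
        proof -
          have "1 * norm (\<Sum>i<m. \<sigma> i *\<^sub>R kap (z i)) \<le> real m * norm (\<Sum>i<m. \<sigma> i *\<^sub>R kap (z i))"
            by (rule mult_right_mono) (use m_pos in auto)
          then show ?thesis unfolding vv_def using mpos by (simp add: field_simps)
        qed
        ultimately show ?thesis by linarith
      qed
      then have "norm (vv z \<sigma>) * R0 / cN N \<le> (\<Sum>i<m. \<bar>\<sigma> i\<bar> * R0) * R0 / cN N"
        using R0(1) cN(1) by (intro divide_right_mono mult_right_mono) auto
      then show ?thesis using hh_le[of "vv z \<sigma>"] by linarith
    qed
    then show "integrable (PiM {..<m} (\<lambda>_. \<rho>)) (\<lambda>z. hh (vv z \<sigma>))"
      using hh_nonneg
      by (intro PP.integrable_const_bound[where B="(\<Sum>i<m. \<bar>\<sigma> i\<bar> * R0) * R0 / cN N"] AE_I2)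
         (auto simp: vv_def)
  qed
  have "(\<integral>z. FD D z \<partial>Om) = (1 / real m) * (\<integral>z. MX D (\<lambda>w. (\<Sum>j\<in>{..<m}. S.Lg w - ell w (z j)) + 0) \<partial>PiM {..<m} (\<lambda>_. \<rho>))"
    unfolding F1 sample_measure_def by simp
  also have "\<dots> \<le> (1 / real m) * (\<integral>z. avg {..<m} (\<lambda>\<sigma>. MX D (\<lambda>w. (\<Sum>j\<in>{..<m}. 2 * \<sigma> j * ell w (z j)) + 0)) \<partial>PiM {..<m} (\<lambda>_. \<rho>))"
    using S.symm[of "{..<m}" "\<lambda>_. 0"] mpos by (intro mult_left_mono) auto
  also have "\<dots> \<le> (1 / real m) * (\<integral>z. (2 * real m / (lam * r)) * avg {..<m} (\<lambda>\<sigma>. hh (vv z \<sigma>)) \<partial>PiM {..<m} (\<lambda>_. \<rho>))"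
    using mpos by (intro mult_left_mono integral_mono intL) (use intR contr in auto)
  also have "\<dots> = 2 / (lam * r) * (\<integral>z. avg {..<m} (\<lambda>\<sigma>. hh (vv z \<sigma>)) \<partial>Om)"
    using mpos unfolding sample_measure_def by simp
  also have "\<dots> = 2 * rad_complexity m \<rho> N X / (lam * r)" unfolding rad_eq by simp
  finally show ?thesis .
qed

end


context setting
begin

lemma sum_upd_lt:
  assumes "i < m"
  shows "(\<Sum>j<m. f ((x(i:=y)) j)) = f y + (\<Sum>j\<in>{..<m} - {i}. f (x j))"
proof -
  have "(\<Sum>j<m. f ((x(i:=y)) j)) = f ((x(i:=y)) i) + (\<Sum>j\<in>{..<m} - {i}. f ((x(i:=y)) j))"
    by (rule sum.remove) (use assms in auto)
  also have "(\<Sum>j\<in>{..<m} - {i}. f ((x(i:=y)) j)) = (\<Sum>j\<in>{..<m} - {i}. f (x j))"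
    by (rule sum.cong) auto
  finally show ?thesis by simp
qed

lemma Lz_upd: "i < m \<Longrightarrow> Lz w (x(i:=y)) - Lz w (x(i:=y')) = (ell w y - ell w y') / real m"
  unfolding Lz_def using sum_upd_lt[of i "ell w" x y] sum_upd_lt[of i "ell w" x y']
  by (simp add: field_simps)

lemma Lw_bounds: "w \<in> W \<Longrightarrow> 0 \<le> Lw w \<and> Lw w \<le> 1 + B"
proof -
  assume w: "w \<in> W"
  interpret R: prob_space \<rho> by (rule rho_prob)
  have i: "integrable \<rho> (ell w)"
    using ell_bounds[OF w] ell_meas by (intro R.integrable_const_bound[where B="1+B"] AE_I2) auto
  have "0 \<le> Lw w" unfolding Lw_def by (rule Bochner_Integration.integral_nonneg) (use ell_bounds[OF w] in auto)
  moreover have "Lw w \<le> (\<integral>a. 1 + B \<partial>\<rho>)" unfolding Lw_def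
    by (rule integral_mono[OF i]) (use ell_bounds[OF w] in auto)
  ultimately show ?thesis by (simp add: R.prob_space)
qed

lemma Lz_bounds: "w \<in> W \<Longrightarrow> 0 \<le> Lz w z \<and> Lz w z \<le> 1 + B"
proof -
  assume w: "w \<in> W"
  have "(\<Sum>i<m. ell w (z i)) \<le> (\<Sum>i<m. 1 + B)" by (rule sum_mono) (use ell_bounds[OF w] in auto)
  moreover have "0 \<le> (\<Sum>i<m. ell w (z i))" by (rule sum_nonneg) (use ell_bounds[OF w] in auto)
  ultimately show ?thesis unfolding Lz_def using m_pos by (auto simp: field_simps)
qed

context
  fixes D assumes D: "finite D" "D \<subseteq> W" "D \<noteq> {}"
begin

lemma FD_abs: "\<bar>FD D z\<bar> \<le> 1 + B"
  unfolding FD_def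
proof (rule MX_abs[OF D(1,3)])
  fix w assume "w \<in> D"
  then have w: "w \<in> W" using D(2) by auto
  show "\<bar>Lw w - Lz w z\<bar> \<le> 1 + B" using Lw_bounds[OF w] Lz_bounds[OF w, of z] by linarith
qed

lemma FD_meas: "FD D \<in> borel_measurable Om"
  unfolding FD_def[abs_def] Lz_def sample_measure_def
  by (rule MX_measurable[OF D(1,3)]) (intro borel_measurable_diff borel_measurable_const borel_measurable_times
         borel_measurable_sum meas_comp_PiM ell_meas; simp)

lemma FD_bd: "i < m \<Longrightarrow> FD D (x(i:=y)) - FD D (x(i:=y')) \<le> 2 * B / real m"
proof -
  assume i: "i < m"
  have "FD D (x(i:=y)) \<le> MX D (\<lambda>w. (Lw w - Lz w (x(i:=y'))) + 2 * B / real m)"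
    unfolding FD_def
  proof (rule MX_mono[OF D(1,3)])
    fix w assume "w \<in> D"
    then have w: "w \<in> W" using D(2) by auto
    have "ell w y' - ell w y \<le> 2 * B" using ell_diff[OF w, of y' y] by linarith
    then have "(ell w y' - ell w y) / real m \<le> 2 * B / real m" using m_pos by (simp add: divide_right_mono)
    then show "Lw w - Lz w (x(i:=y)) \<le> Lw w - Lz w (x(i:=y')) + 2 * B / real m"
      using Lz_upd[OF i, of w x y' y] by (simp add: field_simps)
  qed
  also have "\<dots> \<le> FD D (x(i:=y')) + MX D (\<lambda>w. 2 * B / real m)"
    unfolding FD_def by (rule MX_add[OF D(1,3)])
  also have "MX D (\<lambda>w. 2 * B / real m) = 2 * B / real m"
    using MX_attained[OF D(1,3), of "\<lambda>w. 2 * B / real m"] by auto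
  finally show ?thesis by linarith
qed

lemma tail:
  assumes Bpos: "B > 0" and a: "a > 0"
  shows "measure Om {z \<in> space Om. FD D z - (\<integral>z. FD D z \<partial>Om) \<ge> a} \<le> exp (- a\<^sup>2 * real m / (2 * B\<^sup>2))"
proof -
  interpret PO: prob_space Om by (rule Om_prob)
  define EF where "EF = (\<integral>z. FD D z \<partial>Om)"
  define s where "s = a * real m / B\<^sup>2"
  have s: "s > 0" unfolding s_def using a Bpos m_pos by simp
  have mgf: "(\<integral>\<^sup>+z. ennreal (exp (s * (FD D z - EF))) \<partial>Om) \<le> ennreal (exp (s\<^sup>2 * real (card {..<m}) * (2 * B / real m)\<^sup>2 / 8))"
    unfolding EF_def sample_measure_def
  proof (rule mcdiarmid_mgf[OF rho_prob finite_lessThan _ _ _ s])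
    show "FD D \<in> borel_measurable (PiM {..<m} (\<lambda>_. \<rho>))" using FD_meas unfolding sample_measure_def .
    show "\<bar>FD D x\<bar> \<le> 1 + B" for x by (rule FD_abs)
    show "FD D (x(i:=y)) - FD D (x(i:=y')) \<le> 2 * B / real m" if "i \<in> {..<m}" for x i y y'
      using FD_bd that by auto
  qed
  have "emeasure Om {z \<in> space Om. FD D z - EF \<ge> a}
      \<le> ennreal (exp (- s * a)) * (\<integral>\<^sup>+z. ennreal (exp (s * (FD D z - EF))) * indicator (space Om) z \<partial>Om)"
    by (rule Chernoff_ineq_nn_integral_ge[OF s]) (use FD_meas in auto)
  also have "(\<integral>\<^sup>+z. ennreal (exp (s * (FD D z - EF))) * indicator (space Om) z \<partial>Om)
      = (\<integral>\<^sup>+z. ennreal (exp (s * (FD D z - EF))) \<partial>Om)"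
    by (rule nn_integral_cong) auto
  also have "ennreal (exp (- s * a)) * \<dots> \<le> ennreal (exp (- s * a)) * ennreal (exp (s\<^sup>2 * real (card {..<m}) * (2 * B / real m)\<^sup>2 / 8))"
    by (rule mult_left_mono[OF mgf]) simp
  also have "\<dots> = ennreal (exp (- a\<^sup>2 * real m / (2 * B\<^sup>2)))"
  proof -
    have "- s * a + s\<^sup>2 * real (card {..<m}) * (2 * B / real m)\<^sup>2 / 8 = - a\<^sup>2 * real m / (2 * B\<^sup>2)"
      unfolding s_def using Bpos m_pos by (simp add: field_simps power2_eq_square)
    then show ?thesis by (simp add: ennreal_mult'[symmetric] exp_add[symmetric])
  qed
  finally have "emeasure Om {z \<in> space Om. FD D z - EF \<ge> a} \<le> ennreal (exp (- a\<^sup>2 * real m / (2 * B\<^sup>2)))" .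
  then show ?thesis unfolding EF_def PO.emeasure_eq_measure by simp
qed

end
end


context setting
begin

lemma Rm_nonneg: "0 \<le> rad_complexity m \<rho> N X"
  unfolding rad_eq
  by (rule Bochner_Integration.integral_nonneg) (auto simp: avg_def intro!: divide_nonneg_pos sum_nonneg hh_nonneg)

lemma ell_int: "w \<in> W \<Longrightarrow> integrable \<rho> (ell w)"
proof -
  assume w: "w \<in> W"
  interpret R: prob_space \<rho> by (rule rho_prob)
  show ?thesis using ell_bounds[OF w] ell_meas by (intro R.integrable_const_bound[where B="1+B"] AE_I2) auto
qed

lemma Lw_lip: "w \<in> W \<Longrightarrow> d \<in> W \<Longrightarrow> \<bar>Lw w - Lw d\<bar> \<le> R0 * norm (w - d)"
proof -
  assume w: "w \<in> W" and d: "d \<in> W"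
  have "Lw w - Lw d = (\<integral>a. ell w a - ell d a \<partial>\<rho>)"
    unfolding Lw_def by (rule Bochner_Integration.integral_diff[symmetric, OF ell_int[OF w] ell_int[OF d]])
  also have "\<bar>\<dots>\<bar> \<le> R0 * norm (w - d)"
    by (rule prob_integral_abs_le[OF rho_prob]) (use ell_meas ell_lip in auto)
  finally show ?thesis .
qed

lemma Lz_lip: "\<bar>Lz w z - Lz d z\<bar> \<le> R0 * norm (w - d)"
proof -
  have "\<bar>\<Sum>i<m. ell w (z i) - ell d (z i)\<bar> \<le> real (card {..<m}) * (R0 * norm (w - d))"
    by (rule sum_abs_bound) (rule ell_lip)
  then show ?thesis unfolding Lz_def using m_pos by (simp add: sum_subtractf field_simps)
qed

lemma supp_sets: "{z \<in> space Om. supp z} \<in> sets Om"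
  unfolding supp_def sample_measure_def using S0_sets by measurable

lemma main:
  assumes \<delta>: "0 < \<delta>" "\<delta> < 1"
  shows "\<exists>S \<in> sets Om. measure Om S \<ge> 1 - \<delta> \<and>
           (\<forall>z \<in> S. gen_err \<rho> (fz z) \<le> emp_err_A m r z (Az z)
                + 4 * rad_complexity m \<rho> N X / (lam * r)
                + 2 * Xstar N X / (lam * r) * sqrt (2 * ln (1 / \<delta>) / real m))"
proof -
  interpret PO: prob_space Om by (rule Om_prob)
  define Q where "Q = sqrt (2 * ln (1 / \<delta>) / real m)"
  have lnpos: "ln (1 / \<delta>) > 0" using \<delta> by simp
  have Qpos: "Q > 0" unfolding Q_def using lnpos m_pos by simp
  have Qsq: "Q\<^sup>2 = 2 * ln (1 / \<delta>) / real m" unfolding Q_def using lnpos m_pos by simp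
  have XB: "2 * Xstar N X / (lam * r) * sqrt (2 * ln (1 / \<delta>) / real m) = 2 * B * Q"
    unfolding B_def Q_def by simp
  have Rm: "0 \<le> rad_complexity m \<rho> N X" by (rule Rm_nonneg)
  have lr: "lam * r > 0" using lam_pos r_pos by simp
  have Psupp: "measure Om {z \<in> space Om. supp z} = 1"
    using PO.prob_Collect_eq_1[OF supp_sets] AE_supp by simp
  have common: "\<exists>w\<in>W. gen_err \<rho> (fz z) = Lw w \<and> Lz w z \<le> emp_err_A m r z (Az z)" if z: "supp z" for z
  proof -
    obtain w where w: "w \<in> W" "fz z = (\<lambda>x. w \<bullet> x)" using fz_linear[OF z] by blast
    have "gen_err \<rho> (fz z) = Lw w" unfolding w(2) gen_err_ell Lw_def ..
    moreover have "Lz w z \<le> emp_err_A m r z (Az z)"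
      using fz_emp[OF z] emp_hinge_ell[OF z, of w] unfolding w(2) Lz_def by simp
    ultimately show ?thesis using w(1) by blast
  qed
  show ?thesis
  proof (cases "B = 0")
    case True
    show ?thesis
    proof (intro bexI[of _ "{z \<in> space Om. supp z}"] conjI ballI)
      show "{z \<in> space Om. supp z} \<in> sets Om" by (rule supp_sets)
      show "1 - \<delta> \<le> measure Om {z \<in> space Om. supp z}" using Psupp \<delta> by simp
      fix z assume "z \<in> {z \<in> space Om. supp z}"
      then have z: "supp z" by auto
      obtain w where w: "w \<in> W" "gen_err \<rho> (fz z) = Lw w" "Lz w z \<le> emp_err_A m r z (Az z)"
        using common[OF z] by blast
      have e1: "ell w a = 1" for a
      proof -
        have "\<bar>w \<bullet> fst (pz a)\<bar> \<le> 0" using W_bound[OF w(1) pz_X] True by simp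
        then show ?thesis unfolding ell_def pos_part_def by simp
      qed
      have "Lw w = 1" unfolding Lw_def e1 by (simp add: rho_prob prob_space.prob_space)
      moreover have "Lz w z = 1" unfolding Lz_def e1 using m_pos by simp
      ultimately have "gen_err \<rho> (fz z) \<le> emp_err_A m r z (Az z)" using w by simp
      moreover have "0 \<le> 4 * rad_complexity m \<rho> N X / (lam * r)" using Rm lr by simp
      moreover have "0 \<le> 2 * Xstar N X / (lam * r) * sqrt (2 * ln (1 / \<delta>) / real m)"
        unfolding XB using B_nonneg Qpos by simp
      ultimately show "gen_err \<rho> (fz z) \<le> emp_err_A m r z (Az z) + 4 * rad_complexity m \<rho> N X / (lam * r)
                + 2 * Xstar N X / (lam * r) * sqrt (2 * ln (1 / \<delta>) / real m)" by linarith
    qed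
  next
    case False
    then have Bpos: "B > 0" using B_nonneg by simp
    define a where "a = B * Q"
    have apos: "a > 0" unfolding a_def using Bpos Qpos by simp
    define \<eta> where "\<eta> = a / (2 * R0)"
    have eta: "\<eta> > 0" unfolding \<eta>_def using apos R0(1) by simp
    obtain D where D: "finite D" "D \<subseteq> W" "D \<noteq> {}" and net: "\<And>w. w \<in> W \<Longrightarrow> \<exists>d\<in>D. norm (w - d) < \<eta>"
      using W_net[OF eta] by blast
    define EF where "EF = (\<integral>z. FD D z \<partial>Om)"
    have EF: "EF \<le> 2 * rad_complexity m \<rho> N X / (lam * r)" unfolding EF_def by (rule EF_bound[OF D])
    note FDm[measurable] = FD_meas[OF D]
    define S where "S = {z \<in> space Om. supp z} \<inter> {z \<in> space Om. FD D z - EF < a}"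
    have S2: "{z \<in> space Om. FD D z - EF < a} \<in> sets Om" by measurable
    have Ssets: "S \<in> sets Om" unfolding S_def using supp_sets S2 by auto
    have bad: "{z \<in> space Om. FD D z - EF \<ge> a} \<in> sets Om" by measurable
    have tl: "measure Om {z \<in> space Om. FD D z - EF \<ge> a} \<le> \<delta>"
    proof -
      have "measure Om {z \<in> space Om. FD D z - EF \<ge> a} \<le> exp (- a\<^sup>2 * real m / (2 * B\<^sup>2))"
        unfolding EF_def by (rule tail[OF D Bpos apos])
      also have "- a\<^sup>2 * real m / (2 * B\<^sup>2) = - ln (1 / \<delta>)"
        unfolding a_def power_mult_distrib Qsq using Bpos m_pos by (simp add: field_simps)
      also have "exp (- ln (1 / \<delta>)) = \<delta>" using \<delta> by (simp add: exp_minus)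
      finally show ?thesis .
    qed
    have "space Om - S \<subseteq> (space Om - {z \<in> space Om. supp z}) \<union> {z \<in> space Om. FD D z - EF \<ge> a}"
      unfolding S_def by auto
    then have "measure Om (space Om - S) \<le> measure Om ((space Om - {z \<in> space Om. supp z}) \<union> {z \<in> space Om. FD D z - EF \<ge> a})"
      by (intro PO.finite_measure_mono) (use supp_sets bad in auto)
    also have "\<dots> \<le> measure Om (space Om - {z \<in> space Om. supp z}) + measure Om {z \<in> space Om. FD D z - EF \<ge> a}"
      by (rule measure_subadditive) (use supp_sets bad in auto)
    also have "measure Om (space Om - {z \<in> space Om. supp z}) = 0"
      using PO.prob_compl[OF supp_sets] Psupp by simp
    finally have "measure Om (space Om - S) \<le> \<delta>" using tl by simp
    then have mS: "measure Om S \<ge> 1 - \<delta>" using PO.prob_compl[OF Ssets] by simp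
    show ?thesis
    proof (intro bexI[of _ S] conjI ballI Ssets mS)
      fix z assume zS: "z \<in> S"
      then have z: "supp z" and Fz: "FD D z - EF < a" unfolding S_def by auto
      obtain w where w: "w \<in> W" "gen_err \<rho> (fz z) = Lw w" "Lz w z \<le> emp_err_A m r z (Az z)"
        using common[OF z] by blast
      obtain d where d: "d \<in> D" "norm (w - d) < \<eta>" using net[OF w(1)] by blast
      have dW: "d \<in> W" using d D(2) by auto
      have "Lw d - Lz d z \<le> FD D z" unfolding FD_def by (rule MX_ge[OF D(1,3) d(1)])
      moreover have "\<bar>Lw w - Lw d\<bar> \<le> R0 * norm (w - d)" by (rule Lw_lip[OF w(1) dW])
      moreover have "\<bar>Lz w z - Lz d z\<bar> \<le> R0 * norm (w - d)" by (rule Lz_lip)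
      moreover have "R0 * norm (w - d) \<le> R0 * \<eta>" using d(2) R0(1) by simp
      moreover have "2 * (R0 * \<eta>) = a" unfolding \<eta>_def using R0(1) by simp
      ultimately have "Lw w \<le> Lz w z + EF + 2 * a" using Fz by linarith
      then have "gen_err \<rho> (fz z) \<le> emp_err_A m r z (Az z) + 2 * rad_complexity m \<rho> N X / (lam * r) + 2 * a"
        using w EF by linarith
      moreover have "2 * rad_complexity m \<rho> N X / (lam * r) \<le> 4 * rad_complexity m \<rho> N X / (lam * r)"
        using Rm lr by (simp add: divide_right_mono)
      moreover have "2 * a = 2 * Xstar N X / (lam * r) * sqrt (2 * ln (1 / \<delta>) / real m)"
        unfolding XB a_def by simp
      ultimately show "gen_err \<rho> (fz z) \<le> emp_err_A m r z (Az z) + 4 * rad_complexity m \<rho> N X / (lam * r)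
                + 2 * Xstar N X / (lam * r) * sqrt (2 * ln (1 / \<delta>) / real m)" by linarith
    qed
  qed
qed

end

theorem theorem2:
  fixes X :: "(real^'d) set"
    and \<rho> :: "((real^'d) \<times> real) measure"
    and m :: nat and r lam \<delta> :: real
    and N :: "real^'d^'d \<Rightarrow> real"
    and Az :: "(nat \<Rightarrow> (real^'d) \<times> real) \<Rightarrow> real^'d^'d"
    and fz :: "(nat \<Rightarrow> (real^'d) \<times> real) \<Rightarrow> (real^'d \<Rightarrow> real)"
  assumes m_pos: "m \<ge> 1"
    and X_domain: "open X" "connected X" "bounded X" "X \<noteq> {}"
    and rho_prob: "prob_space \<rho>" and rho_sets: "sets \<rho> = sets borel"
    and rho_supp: "AE zz in \<rho>. zz \<in> X \<times> {-1, 1}"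
    and r_pos: "r > 0" and lam_pos: "lam > 0"
    and N_norm: "is_matrix_norm N"
    and Az_min: "\<And>z. transpose (Az z) = Az z \<and>
        (\<forall>A. transpose A = A \<longrightarrow>
           emp_err_A m r z (Az z) + lam * N (Az z) \<le> emp_err_A m r z A + lam * N A)"
    and fz_min: "\<And>z. fz z \<in> hyp_space m r z (Az z) \<and>
        (\<forall>f \<in> hyp_space m r z (Az z). emp_hinge m z (fz z) \<le> emp_hinge m z f)"
    and delta: "0 < \<delta>" "\<delta> < 1"
  shows "\<exists>S \<in> sets (sample_measure m \<rho>).
           measure (sample_measure m \<rho>) S \<ge> 1 - \<delta> \<and>
           (\<forall>z \<in> S. gen_err \<rho> (fz z) \<le> emp_err_A m r z (Az z)
                + 4 * rad_complexity m \<rho> N X / (lam * r)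
                + 2 * Xstar N X / (lam * r) * sqrt (2 * ln (1 / \<delta>) / real m))"
proof -
  interpret setting X \<rho> m r lam N Az fz
    by (rule setting.intro) (use assms in auto)
  show ?thesis by (rule main[OF delta])
qed


end
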